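(* Let $r\geq3$ be fixed and $\gamma_{n,r}=\sqrt{(r-2)(n-r+2)}$. For each sufficiently large $n$, let $G$ be an $n$-vertex $K_r$-minor free graph with maximum spread, and let $L$ be a set of $r-2$ vertices of $G$ such that every vertex of $L$ is adjacent to every vertex of $V(G)\setminus L$ and $V(G)\setminus L$ is independent (such a set exists for $n$ large). Let $A_L$ be the adjacency matrix of $G[L]$, $\ell_1=\mathbf 1^{\mathrm T}A_L\mathbf 1$ and $\ell_2=\mathbf 1^{\mathrm T}A_L^2\mathbf 1$. Then \[ s(G)=2\gamma_{n,r}+\frac{1}{r-2}\Big(-\frac{3}{4(r-2)}\ell_1^2+\ell_2\Big)\frac{1}{\gamma_{n,r}}+O\Big(\frac{1}{\gamma_{n,r}^3}\Big). \]
   Context: $s(G)=\lambda_1(G)-\lambda_n(G)$ is the spread (difference of largest and smallest adjacency eigenvalues). $\mathbf 1$ is the all-ones vector. Implicit constants depend only on $r$. *)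

theory Defs
  imports Complex_Main
begin

definition simple_graph :: "nat \<Rightarrow> (nat \<Rightarrow> nat \<Rightarrow> bool) \<Rightarrow> bool" where
  "simple_graph n E \<longleftrightarrow> (\<forall>i j. E i j \<longrightarrow> i < n \<and> j < n) \<and> (\<forall>i j. E i j \<longrightarrow> E j i) \<and> (\<forall>i. \<not> E i i)"

definition connected_set :: "(nat \<Rightarrow> nat \<Rightarrow> bool) \<Rightarrow> nat set \<Rightarrow> bool" where
  "connected_set E S \<longleftrightarrow> S \<noteq> {} \<and>
     (\<forall>u\<in>S. \<forall>v\<in>S. (\<lambda>x y. x \<in> S \<and> y \<in> S \<and> E x y)\<^sup>*\<^sup>* u v)"

definition has_K_minor :: "nat \<Rightarrow> (nat \<Rightarrow> nat \<Rightarrow> bool) \<Rightarrow> nat \<Rightarrow> bool" where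
  "has_K_minor n E r \<longleftrightarrow> (\<exists>B :: nat \<Rightarrow> nat set.
     (\<forall>i<r. B i \<subseteq> {0..<n} \<and> connected_set E (B i)) \<and>
     (\<forall>i<r. \<forall>j<r. i \<noteq> j \<longrightarrow> B i \<inter> B j = {} \<and> (\<exists>u\<in>B i. \<exists>v\<in>B j. E u v)))"

definition adj :: "(nat \<Rightarrow> nat \<Rightarrow> bool) \<Rightarrow> nat \<Rightarrow> nat \<Rightarrow> real" where
  "adj E i j = (if E i j then 1 else 0)"

definition is_eigenvalue :: "nat \<Rightarrow> (nat \<Rightarrow> nat \<Rightarrow> real) \<Rightarrow> real \<Rightarrow> bool" where
  "is_eigenvalue n A x \<longleftrightarrow> (\<exists>v :: nat \<Rightarrow> real. (\<exists>i<n. v i \<noteq> 0) \<and>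
     (\<forall>i<n. (\<Sum>j<n. A i j * v j) = x * v i))"

definition spread :: "nat \<Rightarrow> (nat \<Rightarrow> nat \<Rightarrow> bool) \<Rightarrow> real" where
  "spread n E = Max {x. is_eigenvalue n (adj E) x} - Min {x. is_eigenvalue n (adj E) x}"

definition gamma_nr :: "nat \<Rightarrow> nat \<Rightarrow> real" where
  "gamma_nr n r = sqrt ((real r - 2) * (real n - real r + 2))"

definition ell1 :: "(nat \<Rightarrow> nat \<Rightarrow> bool) \<Rightarrow> nat set \<Rightarrow> real" where
  "ell1 E L = (\<Sum>i\<in>L. \<Sum>j\<in>L. adj E i j)"

definition ell2 :: "(nat \<Rightarrow> nat \<Rightarrow> bool) \<Rightarrow> nat set \<Rightarrow> real" where
  "ell2 E L = (\<Sum>i\<in>L. \<Sum>j\<in>L. \<Sum>k\<in>L. adj E i k * adj E k j)"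

end

theory Submission
  imports Defs "Jordan_Normal_Form.Char_Poly"
begin
lemma eig_finite: "finite {x. is_eigenvalue n M x}"
proof -
  let ?A = "mat n n (\<lambda>(i,j). M i j)"
  have A: "?A \<in> carrier_mat n n" by simp
  have sub: "{x. is_eigenvalue n M x} \<subseteq> {x. poly (char_poly ?A) x = 0}"
  proof
    fix x assume "x \<in> {x. is_eigenvalue n M x}"
    then obtain v where v: "\<exists>i<n. v i \<noteq> 0" "\<forall>i<n. (\<Sum>j<n. M i j * v j) = x * v i"
      unfolding is_eigenvalue_def by auto
    have "eigenvector ?A (vec n v) x"
      unfolding eigenvector_def
    proof (intro conjI)
      show "vec n v \<in> carrier_vec (dim_row ?A)" by simp
      show "vec n v \<noteq> 0\<^sub>v (dim_row ?A)"
      proof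
        assume eq: "vec n v = 0\<^sub>v (dim_row ?A)"
        obtain i where i: "i < n" "v i \<noteq> 0" using v(1) by blast
        have "vec n v $ i = 0\<^sub>v (dim_row ?A) $ i" using eq by simp
        then show False using i by simp
      qed
      show "?A *\<^sub>v vec n v = x \<cdot>\<^sub>v vec n v"
      proof (rule eq_vecI)
        show "dim_vec (?A *\<^sub>v vec n v) = dim_vec (x \<cdot>\<^sub>v vec n v)" by simp
        fix i assume i: "i < dim_vec (x \<cdot>\<^sub>v vec n v)"
        then have i': "i < n" by simp
        have "(?A *\<^sub>v vec n v) $ i = row ?A i \<bullet> vec n v" using i' by simp
        also have "\<dots> = (\<Sum>j\<in>{0..<n}. M i j * v j)"
          unfolding scalar_prod_def using i' by (intro sum.cong) auto
        also have "\<dots> = (\<Sum>j<n. M i j * v j)" by (simp add: atLeast0LessThan)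
        also have "\<dots> = x * v i" using v(2) i' by simp
        finally show "(?A *\<^sub>v vec n v) $ i = (x \<cdot>\<^sub>v vec n v) $ i" using i' by simp
      qed
    qed
    then have "eigenvalue ?A x" unfolding eigenvalue_def by blast
    then show "x \<in> {x. poly (char_poly ?A) x = 0}" using eigenvalue_root_char_poly[OF A] by simp
  qed
  have "char_poly ?A \<noteq> 0" using degree_monic_char_poly[OF A] by (metis coeff_0 zero_neq_one)
  then have "finite {x. poly (char_poly ?A) x = 0}" by (rule poly_roots_finite)
  then show ?thesis using sub finite_subset by blast
qed

definition Phi :: "real \<Rightarrow> real \<Rightarrow> real \<Rightarrow> real \<Rightarrow> real \<Rightarrow> real" where
  "Phi b1 b2 b3 w z = w^5 - w^3 - b1*z*w^2 - b2*z^2*w - b3*z^3"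
definition e2f :: "real \<Rightarrow> real \<Rightarrow> real" where "e2f b1 b2 = b2/2 - 3*b1^2/8"
definition e3f :: "real \<Rightarrow> real \<Rightarrow> real \<Rightarrow> real" where "e3f b1 b2 b3 = b3/2 + b1^3/2 - b1*b2"
definition Wf :: "real \<Rightarrow> real \<Rightarrow> real \<Rightarrow> real \<Rightarrow> real" where
  "Wf b1 b2 b3 z = 1 + (b1/2)*z + e2f b1 b2*z^2 + e3f b1 b2 b3*z^3"
definition Qf :: "real \<Rightarrow> real \<Rightarrow> real \<Rightarrow> real \<Rightarrow> real" where
  "Qf b1 b2 b3 z = (let e1 = b1/2; U = e2f b1 b2 + e3f b1 b2 b3 * z; V = e1 + z*U in
     5*b1*e3f b1 b2 b3 + 9*U*(V^2+V*e1+e1^2) - b1*U*(V+e1) - b2*U + 7*U^2 + 5*V^4 + z*V^5)"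

lemma Phi_W: "Phi b1 b2 b3 (Wf b1 b2 b3 z) z = z^4 * Qf b1 b2 b3 z"
proof -
  define e1 where "e1 = b1/2"
  define e2 where "e2 = e2f b1 b2"
  define e3 where "e3 = e3f b1 b2 b3"
  define U where "U = e2 + e3*z"
  define V where "V = e1 + z*U"
  have W: "Wf b1 b2 b3 z = 1 + z*V" unfolding Wf_def V_def U_def e1_def e2_def e3_def by Groebner_Basis.algebra
  have s1: "Phi b1 b2 b3 (1 + z*V) z = z*(2*V - b1) + z^2*(7*V^2 - 2*b1*V - b2) + z^3*(9*V^3 - b1*V^2 - b2*V - b3) + z^4*(5*V^4 + z*V^5)"
    unfolding Phi_def by Groebner_Basis.algebra
  have s2: "2*V - b1 = 2*z*U" unfolding V_def e1_def by Groebner_Basis.algebra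
  have s3: "2*U + 7*V^2 - 2*b1*V - b2 = z*(2*e3 + 5*b1*U + 7*z*U^2)"
    unfolding V_def U_def e1_def e2_def e2f_def by (simp add: field_simps power2_eq_square power3_eq_cube; simp add: algebra_simps)
  have s4: "2*e3 + 5*b1*U + 9*V^3 - b1*V^2 - b2*V - b3 = z*(5*b1*e3 + 9*U*(V^2+V*e1+e1^2) - b1*U*(V+e1) - b2*U)"
    unfolding V_def U_def e1_def e2_def e2f_def e3_def e3f_def by (simp add: field_simps power2_eq_square power3_eq_cube; simp add: algebra_simps)
  have "Phi b1 b2 b3 (1 + z*V) z = z^2*(2*U + 7*V^2 - 2*b1*V - b2) + z^3*(9*V^3 - b1*V^2 - b2*V - b3) + z^4*(5*V^4 + z*V^5)"
    unfolding s1 using s2 by Groebner_Basis.algebra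
  also have "\<dots> = z^3*(2*e3 + 5*b1*U + 7*z*U^2) + z^3*(9*V^3 - b1*V^2 - b2*V - b3) + z^4*(5*V^4 + z*V^5)"
    unfolding s3 by Groebner_Basis.algebra
  also have "\<dots> = z^3*(2*e3 + 5*b1*U + 9*V^3 - b1*V^2 - b2*V - b3) + z^4*(7*U^2 + 5*V^4 + z*V^5)"
    by Groebner_Basis.algebra
  also have "\<dots> = z^4 * Qf b1 b2 b3 z"
    unfolding s4 Qf_def Let_def U_def[symmetric] e1_def[symmetric] e2_def[symmetric] e3_def[symmetric] V_def[symmetric]
    by Groebner_Basis.algebra
  finally show ?thesis using W by simp
qed

definition bnd :: "real \<Rightarrow> (real\<Rightarrow>real\<Rightarrow>real\<Rightarrow>real\<Rightarrow>real) \<Rightarrow> bool" where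
 "bnd K f \<longleftrightarrow> (\<exists>B. \<forall>b1 b2 b3 z. \<bar>b1\<bar> \<le> K \<longrightarrow> \<bar>b2\<bar> \<le> K^2 \<longrightarrow> \<bar>b3\<bar> \<le> K^3 \<longrightarrow> \<bar>z\<bar> \<le> 1 \<longrightarrow> \<bar>f b1 b2 b3 z\<bar> \<le> B)"

lemma bnd_const: "bnd K (\<lambda>b1 b2 b3 z. c)"
  unfolding bnd_def by (rule exI[of _ "\<bar>c\<bar>"]) auto
lemma bnd_b1: "bnd K (\<lambda>b1 b2 b3 z. b1)"
  unfolding bnd_def by (rule exI[of _ K]) auto
lemma bnd_b2: "bnd K (\<lambda>b1 b2 b3 z. b2)"
  unfolding bnd_def by (rule exI[of _ "K^2"]) auto
lemma bnd_b3: "bnd K (\<lambda>b1 b2 b3 z. b3)"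
  unfolding bnd_def by (rule exI[of _ "K^3"]) auto
lemma bnd_z: "bnd K (\<lambda>b1 b2 b3 z. z)"
  unfolding bnd_def by (rule exI[of _ 1]) auto
lemma bnd_add: "bnd K f \<Longrightarrow> bnd K g \<Longrightarrow> bnd K (\<lambda>b1 b2 b3 z. f b1 b2 b3 z + g b1 b2 b3 z)"
  unfolding bnd_def
proof (elim exE)
  fix B1 B2 assume 1: "\<forall>b1 b2 b3 z. \<bar>b1\<bar> \<le> K \<longrightarrow> \<bar>b2\<bar> \<le> K^2 \<longrightarrow> \<bar>b3\<bar> \<le> K^3 \<longrightarrow> \<bar>z\<bar> \<le> 1 \<longrightarrow> \<bar>f b1 b2 b3 z\<bar> \<le> B1"
    and 2: "\<forall>b1 b2 b3 z. \<bar>b1\<bar> \<le> K \<longrightarrow> \<bar>b2\<bar> \<le> K^2 \<longrightarrow> \<bar>b3\<bar> \<le> K^3 \<longrightarrow> \<bar>z\<bar> \<le> 1 \<longrightarrow> \<bar>g b1 b2 b3 z\<bar> \<le> B2"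
  show "\<exists>B. \<forall>b1 b2 b3 z. \<bar>b1\<bar> \<le> K \<longrightarrow> \<bar>b2\<bar> \<le> K^2 \<longrightarrow> \<bar>b3\<bar> \<le> K^3 \<longrightarrow> \<bar>z\<bar> \<le> 1 \<longrightarrow> \<bar>f b1 b2 b3 z + g b1 b2 b3 z\<bar> \<le> B"
  proof (rule exI[of _ "B1+B2"], intro allI impI)
    fix b1 b2 b3 z :: real assume h: "\<bar>b1\<bar> \<le> K" "\<bar>b2\<bar> \<le> K^2" "\<bar>b3\<bar> \<le> K^3" "\<bar>z\<bar> \<le> 1"
    have "\<bar>f b1 b2 b3 z\<bar> \<le> B1" "\<bar>g b1 b2 b3 z\<bar> \<le> B2" using 1 2 h by auto
    then show "\<bar>f b1 b2 b3 z + g b1 b2 b3 z\<bar> \<le> B1 + B2" by linarith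
  qed
qed
lemma bnd_mult: "bnd K f \<Longrightarrow> bnd K g \<Longrightarrow> bnd K (\<lambda>b1 b2 b3 z. f b1 b2 b3 z * g b1 b2 b3 z)"
  unfolding bnd_def
proof (elim exE)
  fix B1 B2 assume 1: "\<forall>b1 b2 b3 z. \<bar>b1\<bar> \<le> K \<longrightarrow> \<bar>b2\<bar> \<le> K^2 \<longrightarrow> \<bar>b3\<bar> \<le> K^3 \<longrightarrow> \<bar>z\<bar> \<le> 1 \<longrightarrow> \<bar>f b1 b2 b3 z\<bar> \<le> B1"
    and 2: "\<forall>b1 b2 b3 z. \<bar>b1\<bar> \<le> K \<longrightarrow> \<bar>b2\<bar> \<le> K^2 \<longrightarrow> \<bar>b3\<bar> \<le> K^3 \<longrightarrow> \<bar>z\<bar> \<le> 1 \<longrightarrow> \<bar>g b1 b2 b3 z\<bar> \<le> B2"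
  show "\<exists>B. \<forall>b1 b2 b3 z. \<bar>b1\<bar> \<le> K \<longrightarrow> \<bar>b2\<bar> \<le> K^2 \<longrightarrow> \<bar>b3\<bar> \<le> K^3 \<longrightarrow> \<bar>z\<bar> \<le> 1 \<longrightarrow> \<bar>f b1 b2 b3 z * g b1 b2 b3 z\<bar> \<le> B"
  proof (rule exI[of _ "B1*B2"], intro allI impI)
    fix b1 b2 b3 z :: real assume h: "\<bar>b1\<bar> \<le> K" "\<bar>b2\<bar> \<le> K^2" "\<bar>b3\<bar> \<le> K^3" "\<bar>z\<bar> \<le> 1"
    have "\<bar>f b1 b2 b3 z\<bar> \<le> B1" "\<bar>g b1 b2 b3 z\<bar> \<le> B2" using 1 2 h by auto
    then show "\<bar>f b1 b2 b3 z * g b1 b2 b3 z\<bar> \<le> B1 * B2"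
      by (simp add: abs_mult mult_mono')
  qed
qed
lemma bnd_uminus: "bnd K f \<Longrightarrow> bnd K (\<lambda>b1 b2 b3 z. - f b1 b2 b3 z)"
  unfolding bnd_def abs_minus_cancel by assumption
lemma bnd_diff: "bnd K f \<Longrightarrow> bnd K g \<Longrightarrow> bnd K (\<lambda>b1 b2 b3 z. f b1 b2 b3 z - g b1 b2 b3 z)"
  using bnd_add[of K f "\<lambda>b1 b2 b3 z. - g b1 b2 b3 z"] bnd_uminus[of K g] by simp
lemma bnd_divide: "bnd K f \<Longrightarrow> bnd K (\<lambda>b1 b2 b3 z. f b1 b2 b3 z / c)"
  using bnd_mult[of K f "\<lambda>b1 b2 b3 z. 1/c"] bnd_const by simp
lemma bnd_power: assumes "bnd K f" shows "bnd K (\<lambda>b1 b2 b3 z. f b1 b2 b3 z ^ p)"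
proof (induction p)
  case 0 show ?case using bnd_const[of K 1] by simp
next
  case (Suc p) show ?case using bnd_mult[OF assms Suc.IH] by simp
qed

lemma Q_bnd: "\<exists>C. \<forall>b1 b2 b3 z. \<bar>b1\<bar> \<le> K \<longrightarrow> \<bar>b2\<bar> \<le> K^2 \<longrightarrow> \<bar>b3\<bar> \<le> K^3 \<longrightarrow> \<bar>z\<bar> \<le> 1 \<longrightarrow> \<bar>Qf b1 b2 b3 z\<bar> \<le> C"
proof -
  have "bnd K Qf" unfolding Qf_def Let_def e2f_def e3f_def by (intro bnd_add bnd_mult bnd_diff bnd_power bnd_divide bnd_const bnd_b1 bnd_b2 bnd_b3 bnd_z)
  then show ?thesis unfolding bnd_def .
qed

lemma W_bnd: "\<exists>C. \<forall>b1 b2 b3 z. \<bar>b1\<bar> \<le> K \<longrightarrow> \<bar>b2\<bar> \<le> K^2 \<longrightarrow> \<bar>b3\<bar> \<le> K^3 \<longrightarrow> \<bar>z\<bar> \<le> 1 \<longrightarrow> \<bar>Wf b1 b2 b3 z - 1\<bar> \<le> C * \<bar>z\<bar>"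
proof -
  have "bnd K (\<lambda>b1 b2 b3 z. b1/2 + e2f b1 b2 * z + e3f b1 b2 b3 * z^2)"
    unfolding e2f_def e3f_def by (intro bnd_add bnd_mult bnd_diff bnd_power bnd_divide bnd_const bnd_b1 bnd_b2 bnd_b3 bnd_z)
  then obtain B where B: "\<forall>b1 b2 b3 z. \<bar>b1\<bar> \<le> K \<longrightarrow> \<bar>b2\<bar> \<le> K^2 \<longrightarrow> \<bar>b3\<bar> \<le> K^3 \<longrightarrow> \<bar>z\<bar> \<le> 1 \<longrightarrow> \<bar>b1/2 + e2f b1 b2 * z + e3f b1 b2 b3 * z^2\<bar> \<le> B"
    unfolding bnd_def by blast
  show ?thesis
  proof (rule exI[of _ B], intro allI impI)
    fix b1 b2 b3 z :: real assume h: "\<bar>b1\<bar> \<le> K" "\<bar>b2\<bar> \<le> K^2" "\<bar>b3\<bar> \<le> K^3" "\<bar>z\<bar> \<le> 1"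
    have "Wf b1 b2 b3 z - 1 = z * (b1/2 + e2f b1 b2 * z + e3f b1 b2 b3 * z^2)"
      unfolding Wf_def by (simp add: algebra_simps power2_eq_square power3_eq_cube)
    then have "\<bar>Wf b1 b2 b3 z - 1\<bar> = \<bar>z\<bar> * \<bar>b1/2 + e2f b1 b2 * z + e3f b1 b2 b3 * z^2\<bar>" by (simp add: abs_mult)
    also have "\<dots> \<le> \<bar>z\<bar> * B" using B h by (simp add: mult_left_mono)
    finally show "\<bar>Wf b1 b2 b3 z - 1\<bar> \<le> B * \<bar>z\<bar>" by (simp add: mult.commute)
  qed
qed


definition Bf :: "real \<Rightarrow> real \<Rightarrow> real \<Rightarrow> real \<Rightarrow> real \<Rightarrow> real" where
  "Bf b1 b2 u w z = u^4+u^3*w+u^2*w^2+u*w^3+w^4 - (u^2+u*w+w^2) - b1*z*(u+w) - b2*z^2"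

lemma Phi_diff: "Phi b1 b2 b3 u z - Phi b1 b2 b3 w z = (u - w) * Bf b1 b2 u w z"
  unfolding Phi_def Bf_def by Groebner_Basis.algebra

lemma prod4_ge: fixes c a1 a2 a3 a4 :: real
  assumes "0 \<le> c" "c \<le> a1" "c \<le> a2" "c \<le> a3" "c \<le> a4" shows "c^4 \<le> a1*a2*a3*a4"
proof -
  have "c*c \<le> a1*a2" using assms by (simp add: mult_mono)
  moreover have "c*c \<le> a3*a4" using assms by (simp add: mult_mono)
  ultimately have "(c*c)*(c*c) \<le> (a1*a2)*(a3*a4)" using assms by (simp add: mult_mono)
  then show ?thesis by (simp add: power4_eq_xxxx mult.assoc)
qed

lemma prod2_le: fixes c a1 a2 :: real
  assumes "0 \<le> a1" "0 \<le> a2" "a1 \<le> c" "a2 \<le> c" shows "a1*a2 \<le> c^2"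
  using assms by (simp add: mult_mono power2_eq_square)

lemma Bpos:
  fixes K b1 b2 u w z :: real
  assumes K: "K \<ge> 1" and hb1: "\<bar>b1\<bar> \<le> K" and hb2: "\<bar>b2\<bar> \<le> K^2"
    and hu: "\<bar>u - 1\<bar> \<le> 1/20" and hw: "\<bar>w - 1\<bar> \<le> 1/20" and hz: "\<bar>z\<bar> \<le> 1/(20*K)"
  shows "Bf b1 b2 u w z \<ge> 1/2"
proof -
  have u1: "19/20 \<le> u" "u \<le> 21/20" and w1: "19/20 \<le> w" "w \<le> 21/20" using abs_le_D1[OF hu] abs_le_D2[OF hu] abs_le_D1[OF hw] abs_le_D2[OF hw] by linarith+
  have q1: "(19/20::real)^4 \<le> u*u*u*u" by (rule prod4_ge) (use u1 in auto)
  have q2: "(19/20::real)^4 \<le> u*u*u*w" by (rule prod4_ge) (use u1 w1 in auto)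
  have q3: "(19/20::real)^4 \<le> u*u*w*w" by (rule prod4_ge) (use u1 w1 in auto)
  have q4: "(19/20::real)^4 \<le> u*w*w*w" by (rule prod4_ge) (use u1 w1 in auto)
  have q5: "(19/20::real)^4 \<le> w*w*w*w" by (rule prod4_ge) (use w1 in auto)
  have p1: "u*u \<le> (21/20::real)^2" by (rule prod2_le) (use u1 in auto)
  have p2: "u*w \<le> (21/20::real)^2" by (rule prod2_le) (use u1 w1 in auto)
  have p3: "w*w \<le> (21/20::real)^2" by (rule prod2_le) (use w1 in auto)
  have Kp: "K > 0" using K by simp
  have bz: "\<bar>b1*z\<bar> \<le> 1/20"
  proof -
    have "\<bar>b1*z\<bar> = \<bar>b1\<bar>*\<bar>z\<bar>" by (simp add: abs_mult)
    also have "\<dots> \<le> K * (1/(20*K))" using hb1 hz by (intro mult_mono) auto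
    also have "\<dots> = 1/20" using Kp by simp
    finally show ?thesis .
  qed
  have t3: "\<bar>b1*z*(u+w)\<bar> \<le> 21/200"
  proof -
    have "\<bar>b1*z*(u+w)\<bar> = \<bar>b1*z\<bar>*\<bar>u+w\<bar>" by (simp add: abs_mult)
    also have "\<dots> \<le> (1/20) * (21/10)" using bz u1 w1 by (intro mult_mono) auto
    finally show ?thesis by simp
  qed
  have zz: "\<bar>z\<bar> * \<bar>z\<bar> \<le> (1/(20*K)) * (1/(20*K))" using hz Kp by (intro mult_mono) auto
  have t4: "\<bar>b2*z^2\<bar> \<le> 1/400"
  proof -
    have "\<bar>b2*z^2\<bar> = \<bar>b2\<bar>*(\<bar>z\<bar>*\<bar>z\<bar>)" by (simp add: abs_mult power2_eq_square)
    also have "\<dots> \<le> K^2 * ((1/(20*K)) * (1/(20*K)))" by (rule mult_mono[OF hb2 zz]) auto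
    also have "\<dots> = 1/400" using Kp by (simp add: power2_eq_square)
    finally show ?thesis .
  qed
  have e: "Bf b1 b2 u w z = u*u*u*u + u*u*u*w + u*u*w*w + u*w*w*w + w*w*w*w - (u*u + u*w + w*w) - b1*z*(u+w) - b2*z^2"
    unfolding Bf_def by (simp add: power2_eq_square power3_eq_cube power4_eq_xxxx mult.assoc)
  have n1: "(19/20::real)^4 = 130321/160000" "(21/20::real)^2 = 441/400" by (simp_all add: power_divide)
  show ?thesis unfolding e using q1 q2 q3 q4 q5 p1 p2 p3 abs_le_D1[OF t3] abs_le_D2[OF t3] abs_le_D1[OF t4] abs_le_D2[OF t4] n1
    by linarith
qed

lemma window:
  fixes K C1 :: real
  assumes K: "K \<ge> 1" and C1: "C1 \<ge> 0"
  shows "\<exists>D z0. D \<ge> 0 \<and> z0 > 0 \<and> (\<forall>b1 b2 b3 z. \<bar>b1\<bar> \<le> K \<longrightarrow> \<bar>b2\<bar> \<le> K^2 \<longrightarrow> \<bar>b3\<bar> \<le> K^3 \<longrightarrow> \<bar>z\<bar> \<le> z0 \<longrightarrow>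
    \<bar>Wf b1 b2 b3 z - 1\<bar> + D*z^4 \<le> 1/20 \<and>
    (\<forall>u. \<bar>u-1\<bar> \<le> 1/20 \<longrightarrow> \<bar>Phi b1 b2 b3 u z\<bar> \<le> C1*z^4 \<longrightarrow> \<bar>u - Wf b1 b2 b3 z\<bar> \<le> D*z^4) \<and>
    (z \<noteq> 0 \<longrightarrow> Phi b1 b2 b3 (Wf b1 b2 b3 z + D*z^4) z > C1*z^4 \<and> Phi b1 b2 b3 (Wf b1 b2 b3 z - D*z^4) z < - (C1*z^4)))"
proof -
  obtain C0 where C0: "\<And>b1 b2 b3 z. \<bar>b1\<bar> \<le> K \<Longrightarrow> \<bar>b2\<bar> \<le> K^2 \<Longrightarrow> \<bar>b3\<bar> \<le> K^3 \<Longrightarrow> \<bar>z\<bar> \<le> 1 \<Longrightarrow> \<bar>Qf b1 b2 b3 z\<bar> \<le> C0"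
    using Q_bnd[of K] by blast
  obtain CW where CW: "\<And>b1 b2 b3 z. \<bar>b1\<bar> \<le> K \<Longrightarrow> \<bar>b2\<bar> \<le> K^2 \<Longrightarrow> \<bar>b3\<bar> \<le> K^3 \<Longrightarrow> \<bar>z\<bar> \<le> 1 \<Longrightarrow> \<bar>Wf b1 b2 b3 z - 1\<bar> \<le> CW * \<bar>z\<bar>"
    using W_bnd[of K] by blast
  have C0p: "C0 \<ge> 0" using C0[of 0 0 0 0] K by auto
  have CWp: "CW \<ge> 0" using CW[of 0 0 0 1] K by (auto simp: Wf_def e2f_def e3f_def)
  define D where "D = 2*(C0 + C1) + 2"
  define z0 where "z0 = (1/(20*K))/(CW + D + 1)"
  have Dp: "D \<ge> 0" unfolding D_def using C0p C1 by simp
  have Kp: "K > 0" using K by simp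
  have z0p: "z0 > 0" unfolding z0_def using Kp CWp Dp by (simp add: add_nonneg_pos)
  show ?thesis
  proof (rule exI[of _ D], rule exI[of _ z0], intro conjI allI impI)
    show "D \<ge> 0" "z0 > 0" using Dp z0p by auto
    fix b1 b2 b3 z :: real
    assume hb1: "\<bar>b1\<bar> \<le> K" and hb2: "\<bar>b2\<bar> \<le> K^2" and hb3: "\<bar>b3\<bar> \<le> K^3" and hz: "\<bar>z\<bar> \<le> z0"
    have ne: "CW + D + 1 \<noteq> 0" using CWp Dp by linarith
    have Kne: "K \<noteq> 0" using Kp by simp
    have z0K: "z0 * (CW + D + 1) = 1/(20*K)" unfolding z0_def using ne by simp
    have z0le: "z0 \<le> 1/(20*K)"
    proof -
      have "z0 * 1 \<le> z0 * (CW + D + 1)" using z0p CWp Dp by (intro mult_left_mono) auto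
      then show ?thesis using z0K by simp
    qed
    have K20: "1/(20*K) \<le> 1/20" using K by (simp add: field_simps)
    have hz1: "\<bar>z\<bar> \<le> 1" using hz z0le K20 by linarith
    have hzK: "\<bar>z\<bar> \<le> 1/(20*K)" using hz z0le by linarith
    have z4: "z^4 \<le> \<bar>z\<bar>"
    proof -
      have "\<bar>z\<bar>^4 \<le> \<bar>z\<bar>^1" using hz1 by (intro power_decreasing) auto
      then show ?thesis by simp
    qed
    have z4p: "z^4 \<ge> 0" by simp
    have Wb: "\<bar>Wf b1 b2 b3 z - 1\<bar> \<le> CW * \<bar>z\<bar>" using CW hb1 hb2 hb3 hz1 by blast
    have "\<bar>Wf b1 b2 b3 z - 1\<bar> + D*z^4 \<le> CW*\<bar>z\<bar> + D*\<bar>z\<bar>" using Wb z4 Dp by (simp add: mult_left_mono add_mono)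
    also have "\<dots> \<le> (CW + D + 1) * \<bar>z\<bar>" by (simp add: algebra_simps)
    also have "\<dots> \<le> (CW + D + 1) * z0" using hz CWp Dp by (intro mult_left_mono) auto
    also have "\<dots> \<le> 1/20" using z0K K20 by (simp add: mult.commute)
    finally show win: "\<bar>Wf b1 b2 b3 z - 1\<bar> + D*z^4 \<le> 1/20" .
    have PW: "\<bar>Phi b1 b2 b3 (Wf b1 b2 b3 z) z\<bar> \<le> C0 * z^4"
    proof -
      have "\<bar>Phi b1 b2 b3 (Wf b1 b2 b3 z) z\<bar> = z^4 * \<bar>Qf b1 b2 b3 z\<bar>" unfolding Phi_W by (simp add: abs_mult)
      also have "\<dots> \<le> z^4 * C0" using C0 hb1 hb2 hb3 hz1 by (intro mult_left_mono) auto
      finally show ?thesis by (simp add: mult.commute)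
    qed
    have W1: "\<bar>Wf b1 b2 b3 z - 1\<bar> \<le> 1/20" using win Dp z4p by (smt (verit) mult_nonneg_nonneg)
    {
      fix u assume hu: "\<bar>u-1\<bar> \<le> 1/20" and hP: "\<bar>Phi b1 b2 b3 u z\<bar> \<le> C1*z^4"
      have B: "Bf b1 b2 u (Wf b1 b2 b3 z) z \<ge> 1/2" by (rule Bpos[OF K hb1 hb2 hu W1 hzK])
      have "\<bar>u - Wf b1 b2 b3 z\<bar> * (1/2) \<le> \<bar>u - Wf b1 b2 b3 z\<bar> * Bf b1 b2 u (Wf b1 b2 b3 z) z"
        using B by (intro mult_left_mono) auto
      also have "\<dots> = \<bar>Phi b1 b2 b3 u z - Phi b1 b2 b3 (Wf b1 b2 b3 z) z\<bar>"
        unfolding Phi_diff using B by (simp add: abs_mult)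
      also have "\<dots> \<le> C1*z^4 + C0*z^4" using hP PW by linarith
      finally have "\<bar>u - Wf b1 b2 b3 z\<bar> \<le> 2*(C0+C1)*z^4" by (simp add: algebra_simps)
      also have "\<dots> \<le> D * z^4" unfolding D_def using z4p by (simp add: mult_right_mono)
      finally show "\<bar>u - Wf b1 b2 b3 z\<bar> \<le> D*z^4" .
    }
    assume z0': "z \<noteq> 0"
    have z4pos: "z^4 > 0" using z0' by simp
    let ?W = "Wf b1 b2 b3 z"
    have up: "\<bar>(?W + D*z^4) - 1\<bar> \<le> 1/20" using win Dp z4p by (smt (verit) mult_nonneg_nonneg)
    have dn: "\<bar>(?W - D*z^4) - 1\<bar> \<le> 1/20" using win Dp z4p by (smt (verit) mult_nonneg_nonneg)
    have B1: "Bf b1 b2 (?W + D*z^4) ?W z \<ge> 1/2" by (rule Bpos[OF K hb1 hb2 up W1 hzK])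
    have B2: "Bf b1 b2 (?W - D*z^4) ?W z \<ge> 1/2" by (rule Bpos[OF K hb1 hb2 dn W1 hzK])
    have Dz: "D*z^4 \<ge> 0" using Dp by simp
    have "Phi b1 b2 b3 (?W + D*z^4) z - Phi b1 b2 b3 ?W z = (D*z^4) * Bf b1 b2 (?W + D*z^4) ?W z"
      using Phi_diff[of b1 b2 b3 "?W + D*z^4" z ?W] by simp
    also have "\<dots> \<ge> (D*z^4) * (1/2)" using B1 Dz by (intro mult_left_mono) auto
    finally have i1: "Phi b1 b2 b3 (?W + D*z^4) z - Phi b1 b2 b3 ?W z \<ge> (D*z^4) * (1/2)" .
    have "Phi b1 b2 b3 (?W - D*z^4) z - Phi b1 b2 b3 ?W z = -((D*z^4) * Bf b1 b2 (?W - D*z^4) ?W z)"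
      using Phi_diff[of b1 b2 b3 "?W - D*z^4" z ?W] by simp
    moreover have "(D*z^4) * Bf b1 b2 (?W - D*z^4) ?W z \<ge> (D*z^4) * (1/2)" using B2 Dz by (intro mult_left_mono) auto
    ultimately have i2: "Phi b1 b2 b3 (?W - D*z^4) z - Phi b1 b2 b3 ?W z \<le> - ((D*z^4) * (1/2))" by linarith
    have Dh: "(D*z^4) * (1/2) = (C0 + C1 + 1) * z^4" unfolding D_def by (simp add: algebra_simps)
    have eq: "C0*z^4 + C1*z^4 + z^4 = (C0 + C1 + 1) * z^4" by (simp add: algebra_simps)
    have PW1: "Phi b1 b2 b3 ?W z \<le> C0*z^4" "- Phi b1 b2 b3 ?W z \<le> C0*z^4" using abs_le_D1[OF PW] abs_le_D2[OF PW] by auto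
    show "Phi b1 b2 b3 (?W + D*z^4) z > C1*z^4" "Phi b1 b2 b3 (?W - D*z^4) z < - (C1*z^4)"
      using i1 i2 Dh eq PW1 z4pos by linarith+
  qed
qed


definition ap :: "(nat \<Rightarrow> nat \<Rightarrow> bool) \<Rightarrow> nat set \<Rightarrow> (nat \<Rightarrow> real) \<Rightarrow> nat \<Rightarrow> real" where
  "ap E L y u = (\<Sum>v\<in>L. adj E u v * y v)"
definition pwv :: "(nat \<Rightarrow> nat \<Rightarrow> bool) \<Rightarrow> nat set \<Rightarrow> nat \<Rightarrow> nat \<Rightarrow> real" where
  "pwv E L j = (ap E L ^^ j) (\<lambda>_. 1)"
definition aa :: "(nat \<Rightarrow> nat \<Rightarrow> bool) \<Rightarrow> nat set \<Rightarrow> nat \<Rightarrow> real" where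
  "aa E L j = (\<Sum>u\<in>L. pwv E L j u)"

lemma adj_ge0: "0 \<le> adj E u v" and adj_le1: "adj E u v \<le> 1"
  unfolding adj_def by auto

lemma pwv_Suc: "pwv E L (Suc j) u = (\<Sum>v\<in>L. adj E u v * pwv E L j v)"
  unfolding pwv_def ap_def by simp

lemma ap_bound:
  assumes fin: "finite L" and hy: "\<forall>v\<in>L. \<bar>y v\<bar> \<le> M"
  shows "\<bar>ap E L y u\<bar> \<le> real (card L) * M"
proof -
  have "\<bar>ap E L y u\<bar> \<le> (\<Sum>v\<in>L. \<bar>adj E u v * y v\<bar>)" unfolding ap_def by (rule sum_abs)
  also have "\<dots> \<le> (\<Sum>v\<in>L. M)"
  proof (rule sum_mono)
    fix v assume "v \<in> L"
    then have "\<bar>y v\<bar> \<le> M" using hy by auto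
    then show "\<bar>adj E u v * y v\<bar> \<le> M" using adj_ge0[of E u v] adj_le1[of E u v]
      by (simp add: abs_mult) (smt (verit) mult_left_le_one_le abs_ge_zero)
  qed
  also have "\<dots> = real (card L) * M" by simp
  finally show ?thesis .
qed

lemma itp_bound:
  assumes fin: "finite L" and hy: "\<forall>v\<in>L. \<bar>y v\<bar> \<le> M" and M: "M \<ge> 0"
  shows "u \<in> L \<Longrightarrow> \<bar>(ap E L ^^ p) y u\<bar> \<le> real (card L)^p * M"
proof (induction p arbitrary: u)
  case 0
  then show ?case using hy M by simp
next
  case (Suc p)
  have "\<forall>v\<in>L. \<bar>(ap E L ^^ p) y v\<bar> \<le> real (card L)^p * M" using Suc.IH by auto
  then have "\<bar>ap E L ((ap E L ^^ p) y) u\<bar> \<le> real (card L) * (real (card L)^p * M)"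
    by (rule ap_bound[OF fin])
  then show ?case by (simp add: mult.assoc)
qed


lemma pwv_0[simp]: "pwv E L 0 u = 1" unfolding pwv_def by simp

lemma sol_bound:
  assumes fin: "finite L" and ne: "L \<noteq> {}" and lam: "\<bar>lam\<bar> > real (card L)"
    and eq: "\<forall>u\<in>L. lam * d u = c u + ap E L d u" and hc: "\<forall>u\<in>L. \<bar>c u\<bar> \<le> M0"
  shows "\<forall>u\<in>L. \<bar>d u\<bar> \<le> M0 / (\<bar>lam\<bar> - real (card L))"
proof -
  define M where "M = Max ((\<lambda>u. \<bar>d u\<bar>) ` L)"
  have fin': "finite ((\<lambda>u. \<bar>d u\<bar>) ` L)" using fin by simp
  have ne': "(\<lambda>u. \<bar>d u\<bar>) ` L \<noteq> {}" using ne by simp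
  obtain u0 where u0: "u0 \<in> L" "\<bar>d u0\<bar> = M" using Max_in[OF fin' ne'] unfolding M_def by auto
  have all: "\<forall>v\<in>L. \<bar>d v\<bar> \<le> M" unfolding M_def using fin' by auto
  have "\<bar>lam\<bar> * M = \<bar>lam * d u0\<bar>" using u0 by (simp add: abs_mult)
  also have "\<dots> = \<bar>c u0 + ap E L d u0\<bar>" using eq u0 by simp
  also have "\<dots> \<le> \<bar>c u0\<bar> + \<bar>ap E L d u0\<bar>" by (rule abs_triangle_ineq)
  also have "\<dots> \<le> M0 + real (card L) * M" using hc u0 ap_bound[OF fin all] by (intro add_mono) auto
  finally have "(\<bar>lam\<bar> - real (card L)) * M \<le> M0" by (simp add: algebra_simps)
  then have "M \<le> M0 / (\<bar>lam\<bar> - real (card L))" using lam by (simp add: pos_le_divide_eq mult.commute)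
  then show ?thesis using all by force
qed

lemma step_id:
  assumes sol: "\<forall>u\<in>L. lam * y u = 1 + ap E L y u"
  shows "u \<in> L \<Longrightarrow> lam * (ap E L ^^ j) y u = pwv E L j u + (ap E L ^^ Suc j) y u"
proof (induction j arbitrary: u)
  case 0
  then show ?case using sol by simp
next
  case (Suc j)
  have "lam * (ap E L ^^ Suc j) y u = (\<Sum>v\<in>L. adj E u v * (lam * (ap E L ^^ j) y v))"
    by (simp add: ap_def sum_distrib_left algebra_simps)
  also have "\<dots> = (\<Sum>v\<in>L. adj E u v * (pwv E L j v + (ap E L ^^ Suc j) y v))"
    using Suc.IH by (intro sum.cong) auto
  also have "\<dots> = pwv E L (Suc j) u + (ap E L ^^ Suc (Suc j)) y u"
    by (simp add: pwv_Suc ap_def sum.distrib algebra_simps)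
  finally show ?case .
qed

lemma expand:
  assumes sol: "\<forall>u\<in>L. lam * y u = 1 + ap E L y u" and lam: "lam \<noteq> 0"
  shows "(\<Sum>u\<in>L. y u) = (\<Sum>j<p. aa E L j / lam^(Suc j)) + (\<Sum>u\<in>L. (ap E L ^^ p) y u) / lam^p"
proof (induction p)
  case 0
  then show ?case by simp
next
  case (Suc p)
  have "(\<Sum>u\<in>L. (ap E L ^^ p) y u) = (\<Sum>u\<in>L. (pwv E L p u + (ap E L ^^ Suc p) y u) / lam)"
  proof (rule sum.cong[OF refl])
    fix u assume "u \<in> L"
    from step_id[OF sol this, of p] show "(ap E L ^^ p) y u = (pwv E L p u + (ap E L ^^ Suc p) y u) / lam"
      using lam by (simp add: field_simps)
  qed
  also have "\<dots> = (aa E L p + (\<Sum>u\<in>L. (ap E L ^^ Suc p) y u)) / lam"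
    unfolding aa_def by (simp add: sum_divide_distrib[symmetric] sum.distrib)
  finally have h: "(\<Sum>u\<in>L. (ap E L ^^ p) y u) = (aa E L p + (\<Sum>u\<in>L. (ap E L ^^ Suc p) y u)) / lam" .
  show ?case unfolding Suc h using lam by (simp add: field_simps)
qed

lemma pwv_ge0: "0 \<le> pwv E L j u"
proof (induction j arbitrary: u)
  case 0 then show ?case by simp
next
  case (Suc j) then show ?case unfolding pwv_Suc by (intro sum_nonneg mult_nonneg_nonneg adj_ge0) auto
qed

lemma pwv_le: assumes "finite L" "u \<in> L" shows "pwv E L j u \<le> real (card L)^j"
  using itp_bound[OF assms(1), of "\<lambda>_. 1" 1 u j E] assms(2) pwv_ge0[of E L j u] unfolding pwv_def by simp

lemma aa_ge0: "0 \<le> aa E L j" unfolding aa_def by (intro sum_nonneg pwv_ge0)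

lemma aa_le: assumes "finite L" shows "aa E L j \<le> real (card L)^(Suc j)"
proof -
  have "aa E L j \<le> (\<Sum>u\<in>L. real (card L)^j)" unfolding aa_def using pwv_le[OF assms] by (intro sum_mono) auto
  then show ?thesis by simp
qed

lemma aa1: "aa E L 1 = ell1 E L"
  unfolding aa_def ell1_def by (simp add: pwv_Suc)

lemma aa2: "aa E L 2 = ell2 E L"
proof -
  have "aa E L 2 = (\<Sum>i\<in>L. \<Sum>k\<in>L. \<Sum>j\<in>L. adj E i k * adj E k j)"
    unfolding aa_def numeral_2_eq_2 by (simp add: pwv_Suc sum_distrib_left)
  also have "\<dots> = ell2 E L" unfolding ell2_def by (rule sum.cong[OF refl]) (rule sum.swap)
  finally show ?thesis .
qed



locale gs =
  fixes n :: nat and E :: "nat \<Rightarrow> nat \<Rightarrow> bool" and L :: "nat set"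
  assumes sg: "simple_graph n E" and Lsub: "L \<subseteq> {0..<n}" and Lne: "L \<noteq> {}"
    and full: "\<forall>u\<in>L. \<forall>v\<in>{0..<n} - L. E u v"
    and indep: "\<forall>u\<in>{0..<n} - L. \<forall>v\<in>{0..<n} - L. \<not> E u v"
    and Ine: "{0..<n} - L \<noteq> {}"
begin

definition I where "I = {0..<n} - L"
definition k :: real where "k = real (card L)"
definition m :: real where "m = real (card I)"

lemma finL: "finite L" using Lsub finite_subset by blast
lemma finI: "finite I" unfolding I_def by simp
lemma kpos: "k \<ge> 1" unfolding k_def using finL Lne by (simp add: Suc_leI card_gt_0_iff)
lemma mpos: "m \<ge> 1" unfolding m_def I_def using Ine by (simp add: Suc_leI card_gt_0_iff)

lemma sym: "E u v \<Longrightarrow> E v u" using sg unfolding simple_graph_def by blast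

lemma split_n: "{..<n} = L \<union> I" "L \<inter> I = {}" unfolding I_def using Lsub by auto

lemma row_I: assumes "i \<in> I" shows "(\<Sum>j<n. adj E i j * v j) = (\<Sum>j\<in>L. v j)"
proof -
  have "(\<Sum>j<n. adj E i j * v j) = (\<Sum>j\<in>L. adj E i j * v j) + (\<Sum>j\<in>I. adj E i j * v j)"
    unfolding split_n(1) by (rule sum.union_disjoint[OF finL finI split_n(2)])
  also have "(\<Sum>j\<in>L. adj E i j * v j) = (\<Sum>j\<in>L. v j)"
  proof (rule sum.cong[OF refl])
    fix j assume "j \<in> L" then have "E i j" using full assms sym unfolding I_def by blast
    then show "adj E i j * v j = v j" unfolding adj_def by simp
  qed
  also have "(\<Sum>j\<in>I. adj E i j * v j) = 0"
  proof (rule sum.neutral, rule ballI)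
    fix j assume "j \<in> I" then have "\<not> E i j" using indep assms unfolding I_def by blast
    then show "adj E i j * v j = 0" unfolding adj_def by simp
  qed
  finally show ?thesis by simp
qed

lemma row_L: assumes "u \<in> L" shows "(\<Sum>j<n. adj E u j * v j) = ap E L v u + (\<Sum>j\<in>I. v j)"
proof -
  have "(\<Sum>j<n. adj E u j * v j) = (\<Sum>j\<in>L. adj E u j * v j) + (\<Sum>j\<in>I. adj E u j * v j)"
    unfolding split_n(1) by (rule sum.union_disjoint[OF finL finI split_n(2)])
  also have "(\<Sum>j\<in>I. adj E u j * v j) = (\<Sum>j\<in>I. v j)"
  proof (rule sum.cong[OF refl])
    fix j assume "j \<in> I" then have "E u j" using full assms unfolding I_def by blast
    then show "adj E u j * v j = v j" unfolding adj_def by simp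
  qed
  finally show ?thesis unfolding ap_def by simp
qed

lemma eig_to_sol:
  assumes ev: "is_eigenvalue n (adj E) lam" and lam: "\<bar>lam\<bar> > k"
  shows "\<exists>y. (\<forall>u\<in>L. lam * y u = 1 + ap E L y u) \<and> lam = m * (\<Sum>u\<in>L. y u)"
proof -
  obtain v where v0: "\<exists>i<n. v i \<noteq> 0" and vr: "\<forall>i<n. (\<Sum>j<n. adj E i j * v j) = lam * v i"
    using ev unfolding is_eigenvalue_def by blast
  have lam0: "lam \<noteq> 0" using lam kpos by auto
  define t where "t = (\<Sum>u\<in>L. v u)"
  have vI: "v i = t / lam" if "i \<in> I" for i
  proof -
    have "i < n" using that unfolding I_def by auto
    then have "lam * v i = t" using vr row_I[OF that, of v] unfolding t_def by simp
    then show ?thesis using lam0 by (simp add: field_simps)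
  qed
  have sI: "(\<Sum>j\<in>I. v j) = m * t / lam" using vI unfolding m_def by simp
  have vL: "lam * v u = ap E L v u + m * t / lam" if "u \<in> L" for u
  proof -
    have "u < n" using that Lsub by auto
    then show ?thesis using vr row_L[OF that, of v] sI by simp
  qed
  have t0: "t \<noteq> 0"
  proof
    assume t: "t = 0"
    have "\<forall>u\<in>L. \<bar>v u\<bar> \<le> 0 / (\<bar>lam\<bar> - real (card L))"
      by (rule sol_bound[OF finL Lne, of lam v "\<lambda>_. 0"]) (use lam vL t in \<open>auto simp: k_def\<close>)
    then have "\<forall>u\<in>L. v u = 0" by auto
    moreover have "\<forall>i\<in>I. v i = 0" using vI t by simp
    ultimately show False using v0 split_n(1) by auto
  qed
  define y where "y u = v u * (lam / (m * t))" for u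
  have mt: "m * t \<noteq> 0" using t0 mpos by auto
  show ?thesis
  proof (rule exI[of _ y], intro conjI ballI)
    fix u assume u: "u \<in> L"
    have "ap E L y u = ap E L v u * (lam / (m * t))"
      unfolding ap_def y_def by (simp add: sum_distrib_right sum_divide_distrib mult.assoc)
    then show "lam * y u = 1 + ap E L y u"
      unfolding y_def using vL[OF u] mt lam0 by (simp add: field_simps)
  next
    have "(\<Sum>u\<in>L. y u) = t * (lam / (m * t))" unfolding y_def t_def by (simp add: sum_distrib_right sum_divide_distrib)
    then show "lam = m * (\<Sum>u\<in>L. y u)" using mt t0 by (simp add: field_simps)
  qed
qed

lemma sol_to_eig:
  assumes sol: "\<forall>u\<in>L. lam * y u = 1 + ap E L y u" and lm: "lam = m * (\<Sum>u\<in>L. y u)"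
  shows "is_eigenvalue n (adj E) lam"
proof -
  define v where "v u = (if u \<in> L then y u else 1 / m)" for u
  have m0: "m \<noteq> 0" using mpos by simp
  obtain i0 where i0: "i0 \<in> I" using Ine unfolding I_def by blast
  show ?thesis unfolding is_eigenvalue_def
  proof (rule exI[of _ v], intro conjI allI impI)
    show "\<exists>i<n. v i \<noteq> 0" using i0 m0 unfolding v_def I_def by auto
    fix i assume i: "i < n"
    have sL: "(\<Sum>j\<in>L. v j) = (\<Sum>j\<in>L. y j)" unfolding v_def by simp
    have sI: "(\<Sum>j\<in>I. v j) = 1" unfolding v_def I_def m_def using m0 unfolding m_def I_def by simp
    have apv: "ap E L v u = ap E L y u" for u unfolding ap_def v_def by simp
    show "(\<Sum>j<n. adj E i j * v j) = lam * v i"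
    proof (cases "i \<in> L")
      case True
      then show ?thesis using row_L[OF True, of v] sI apv sol unfolding v_def by simp
    next
      case False
      then have iI: "i \<in> I" using i unfolding I_def by auto
      show ?thesis using row_I[OF iI, of v] sL lm False m0 unfolding v_def by simp
    qed
  qed
qed

end


lemma lip_cont:
  fixes f :: "real \<Rightarrow> real"
  assumes lip: "\<forall>x\<in>S. \<forall>y\<in>S. \<bar>f x - f y\<bar> \<le> C * \<bar>x - y\<bar>" and C: "C > 0"
  shows "continuous_on S f"
  unfolding continuous_on_def tendsto_iff eventually_at
proof (intro ballI allI impI)
  fix x e :: real assume x: "x \<in> S" and e: "e > 0"
  show "\<exists>d>0. \<forall>y\<in>S. y \<noteq> x \<and> dist y x < d \<longrightarrow> dist (f y) (f x) < e"
  proof (rule exI[of _ "e / C"], intro conjI ballI impI)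
    show "e / C > 0" using e C by simp
    fix y assume y: "y \<in> S" and h: "y \<noteq> x \<and> dist y x < e / C"
    have "\<bar>f y - f x\<bar> \<le> C * \<bar>y - x\<bar>" using lip x y by blast
    also have "\<dots> < C * (e / C)" using h C by (intro mult_strict_left_mono) (auto simp: dist_real_def)
    also have "\<dots> = e" using C by simp
    finally show "dist (f y) (f x) < e" by (simp add: dist_real_def)
  qed
qed

context gs
begin

definition Y :: "real \<Rightarrow> nat \<Rightarrow> real" where
  "Y lam u = (\<Sum>j. pwv E L j u / lam^(Suc j))"

lemma Y_summable:
  assumes lam: "\<bar>lam\<bar> \<ge> 2*k" and u: "u \<in> L"
  shows "summable (\<lambda>j. pwv E L j u / lam^(Suc j))"
proof (rule summable_comparison_test'[of "\<lambda>j. (1/2)^j" 0])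
  show "summable (\<lambda>j. (1/2::real)^j)" by (rule summable_geometric) simp
  fix j :: nat
  have k1: "k \<ge> 1" by (rule kpos)
  have l1: "\<bar>lam\<bar> \<ge> 1" using lam k1 by linarith
  have p0: "0 \<le> pwv E L j u" by (rule pwv_ge0)
  have p1: "pwv E L j u \<le> k^j" using pwv_le[OF finL u] unfolding k_def .
  have "(2*k)^j * 1 \<le> \<bar>lam\<bar>^j * \<bar>lam\<bar>"
    using lam l1 k1 by (intro mult_mono power_mono) auto
  then have den: "2^j * k^j \<le> \<bar>lam\<bar>^(Suc j)" by (simp add: power_mult_distrib mult.commute)
  have dpos: "0 < 2^j * k^j" using k1 by simp
  have "norm (pwv E L j u / lam^(Suc j)) = pwv E L j u / \<bar>lam\<bar>^(Suc j)"
    using p0 by (simp add: abs_mult power_abs)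
  also have "\<dots> \<le> k^j / (2^j * k^j)"
    using p0 p1 den dpos by (intro frac_le) auto
  also have "\<dots> = (1/2)^j" using k1 by (simp add: power_one_over)
  finally show "norm (pwv E L j u / lam^(Suc j)) \<le> (1/2)^j" .
qed

lemma Y_sol:
  assumes lam: "\<bar>lam\<bar> \<ge> 2*k"
  shows "\<forall>u\<in>L. lam * Y lam u = 1 + ap E L (Y lam) u"
proof
  fix u assume u: "u \<in> L"
  have lam0: "lam \<noteq> 0" using lam kpos by auto
  let ?f = "\<lambda>j. pwv E L j u / lam^(Suc j)"
  have sf: "summable ?f" by (rule Y_summable[OF lam u])
  let ?g = "\<lambda>j. lam * ?f j"
  have sg: "summable ?g" using summable_mult[OF sf] .
  have g_eq: "?g j = pwv E L j u / lam^j" for j using lam0 by simp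
  have "lam * Y lam u = suminf ?g" unfolding Y_def by (rule suminf_mult[OF sf, symmetric])
  also have "\<dots> = ?g 0 + (\<Sum>j. ?g (Suc j))" using suminf_split_head[OF sg] by simp
  also have "\<dots> = 1 + (\<Sum>j. ?g (Suc j))" using lam0 by simp
  also have "(\<Sum>j. ?g (Suc j)) = (\<Sum>j. \<Sum>v\<in>L. adj E u v * (pwv E L j v / lam^(Suc j)))"
  proof (rule arg_cong[where f=suminf], rule ext)
    fix j
    have c: "lam * (x / (lam * (lam * lam^j))) = x / (lam * lam^j)" for x using lam0 by (simp add: field_simps)
    show "?g (Suc j) = (\<Sum>v\<in>L. adj E u v * (pwv E L j v / lam^(Suc j)))"
      using lam0 by (simp add: pwv_Suc sum_distrib_left sum_divide_distrib c)
  qed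
  also have "\<dots> = (\<Sum>v\<in>L. \<Sum>j. adj E u v * (pwv E L j v / lam^(Suc j)))"
    by (rule suminf_sum) (use Y_summable[OF lam] summable_mult in blast)
  also have "\<dots> = ap E L (Y lam) u"
    unfolding ap_def Y_def by (rule sum.cong[OF refl]) (use Y_summable[OF lam] suminf_mult in blast)
  finally show "lam * Y lam u = 1 + ap E L (Y lam) u" .
qed

lemma sol_norm:
  assumes lam: "\<bar>lam\<bar> > k" and sol: "\<forall>u\<in>L. lam * y u = 1 + ap E L y u"
  shows "\<forall>u\<in>L. \<bar>y u\<bar> \<le> 1 / (\<bar>lam\<bar> - k)"
  using sol_bound[OF finL Lne, of lam y "\<lambda>_. 1" E 1] lam sol unfolding k_def by auto

lemma Y_lip:
  assumes l1: "\<bar>lam\<bar> \<ge> 2*k" and l2: "\<bar>lam'\<bar> \<ge> 2*k" and u: "u \<in> L"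
  shows "\<bar>Y lam u - Y lam' u\<bar> \<le> \<bar>lam - lam'\<bar> / k^2"
proof -
  have k1: "k \<ge> 1" by (rule kpos)
  have s1: "\<forall>u\<in>L. lam * Y lam u = 1 + ap E L (Y lam) u" by (rule Y_sol[OF l1])
  have s2: "\<forall>u\<in>L. lam' * Y lam' u = 1 + ap E L (Y lam') u" by (rule Y_sol[OF l2])
  have b2: "\<forall>u\<in>L. \<bar>Y lam' u\<bar> \<le> 1 / k"
  proof
    fix v assume v: "v \<in> L"
    have "\<bar>Y lam' v\<bar> \<le> 1 / (\<bar>lam'\<bar> - k)" using sol_norm[of lam' "Y lam'"] s2 l2 k1 v by auto
    also have "\<dots> \<le> 1 / k" using l2 k1 by (intro divide_left_mono) auto
    finally show "\<bar>Y lam' v\<bar> \<le> 1 / k" .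
  qed
  define d where "d v = Y lam v - Y lam' v" for v
  define c where "c v = - ((lam - lam') * Y lam' v)" for v
  have apd: "ap E L d v = ap E L (Y lam) v - ap E L (Y lam') v" for v
    unfolding ap_def d_def by (simp add: algebra_simps sum_subtractf)
  have eq: "\<forall>v\<in>L. lam * d v = c v + ap E L d v"
  proof
    fix v assume v: "v \<in> L"
    show "lam * d v = c v + ap E L d v"
      using s1 s2 v unfolding apd unfolding d_def c_def by (simp add: algebra_simps)
  qed
  have hc: "\<forall>v\<in>L. \<bar>c v\<bar> \<le> \<bar>lam - lam'\<bar> * (1/k)"
    unfolding c_def using b2 by (auto simp: abs_mult divide_inverse intro!: mult_left_mono)
  have lk: "\<bar>lam\<bar> > real (card L)" using l1 k1 unfolding k_def by linarith
  have "\<bar>d u\<bar> \<le> (\<bar>lam - lam'\<bar> * (1/k)) / (\<bar>lam\<bar> - real (card L))"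
    using sol_bound[OF finL Lne lk eq hc] u by blast
  also have "\<dots> \<le> (\<bar>lam - lam'\<bar> * (1/k)) / k"
    using l1 k1 unfolding k_def by (intro divide_left_mono) auto
  also have "\<dots> = \<bar>lam - lam'\<bar> / k^2" by (simp add: power2_eq_square)
  finally show ?thesis unfolding d_def .
qed

definition psi :: "real \<Rightarrow> real" where "psi lam = lam - m * (\<Sum>u\<in>L. Y lam u)"

lemma psi_cont:
  assumes S: "\<forall>x\<in>S. \<bar>x\<bar> \<ge> 2*k"
  shows "continuous_on S psi"
proof (rule lip_cont)
  have k1: "k \<ge> 1" by (rule kpos)
  show "1 + m / k > 0" using k1 mpos by (simp add: add_pos_nonneg)
  show "\<forall>x\<in>S. \<forall>y\<in>S. \<bar>psi x - psi y\<bar> \<le> (1 + m / k) * \<bar>x - y\<bar>"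
  proof (intro ballI)
    fix x y assume x: "x \<in> S" and y: "y \<in> S"
    have "\<bar>(\<Sum>u\<in>L. Y x u) - (\<Sum>u\<in>L. Y y u)\<bar> \<le> (\<Sum>u\<in>L. \<bar>Y x u - Y y u\<bar>)"
      by (simp add: sum_subtractf[symmetric] sum_abs)
    also have "\<dots> \<le> (\<Sum>u\<in>L. \<bar>x - y\<bar> / k^2)"
      using Y_lip S x y by (intro sum_mono) auto
    also have "\<dots> = k * (\<bar>x - y\<bar> / k^2)" unfolding k_def by simp
    also have "\<dots> = \<bar>x - y\<bar> / k" using k1 by (simp add: power2_eq_square)
    finally have hs: "\<bar>(\<Sum>u\<in>L. Y x u) - (\<Sum>u\<in>L. Y y u)\<bar> \<le> \<bar>x - y\<bar> / k" .
    have "\<bar>psi x - psi y\<bar> = \<bar>(x - y) - m * ((\<Sum>u\<in>L. Y x u) - (\<Sum>u\<in>L. Y y u))\<bar>"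
      unfolding psi_def by (simp add: algebra_simps)
    also have "\<dots> \<le> \<bar>x - y\<bar> + m * \<bar>(\<Sum>u\<in>L. Y x u) - (\<Sum>u\<in>L. Y y u)\<bar>"
    proof -
      have "\<bar>m * ((\<Sum>u\<in>L. Y x u) - (\<Sum>u\<in>L. Y y u))\<bar> = m * \<bar>(\<Sum>u\<in>L. Y x u) - (\<Sum>u\<in>L. Y y u)\<bar>"
        using mpos by (simp add: abs_mult)
      then show ?thesis using abs_triangle_ineq4[of "x - y" "m * ((\<Sum>u\<in>L. Y x u) - (\<Sum>u\<in>L. Y y u))"] by linarith
    qed
    also have "\<dots> \<le> \<bar>x - y\<bar> + m * (\<bar>x - y\<bar> / k)"
      using mult_left_mono[OF hs, of m] mpos by simp
    also have "\<dots> = (1 + m / k) * \<bar>x - y\<bar>" by (simp add: algebra_simps)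
    finally show "\<bar>psi x - psi y\<bar> \<le> (1 + m / k) * \<bar>x - y\<bar>" .
  qed
qed

end


lemma master_alg:
  fixes g k w a1 a2 a3 S :: real
  assumes "g \<noteq> 0" "k \<noteq> 0" "w \<noteq> 0"
  shows "w^3*(g*w)*((g*w) - g^2/k*(k/(g*w) + a1/(g*w)^2 + a2/(g*w)^3 + a3/(g*w)^4 + S/(g*w)^4))/g^2
     = Phi (a1/k) (a2/k) (a3/k) w (1/g) - (S/k)*(1/g)^3"
  unfolding Phi_def using assms by (simp add: field_simps) Groebner_Basis.algebra

context gs
begin

lemma aa0: "aa E L 0 = k" unfolding aa_def k_def by simp

lemma master:
  assumes lam: "\<bar>lam\<bar> \<ge> 2*k" and sol: "\<forall>u\<in>L. lam * y u = 1 + ap E L y u"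
    and g: "g > 0" and g2: "g^2 = m * k"
  shows "\<exists>R. \<bar>R\<bar> \<le> 2*k^4/\<bar>lam\<bar> \<and>
    (lam/g)^3 * lam * (lam - m * (\<Sum>u\<in>L. y u)) / g^2
      = Phi (aa E L 1 / k) (aa E L 2 / k) (aa E L 3 / k) (lam/g) (1/g) - R * (1/g)^3"
proof -
  have k1: "k \<ge> 1" by (rule kpos)
  have lam0: "lam \<noteq> 0" using lam k1 by auto
  have lk: "\<bar>lam\<bar> > k" using lam k1 by linarith
  define S4 where "S4 = (\<Sum>u\<in>L. (ap E L ^^ 4) y u)"
  have ex: "(\<Sum>u\<in>L. y u) = (\<Sum>j<4. aa E L j / lam^(Suc j)) + S4 / lam^4"
    unfolding S4_def by (rule expand[OF sol lam0])
  have ex4: "(\<Sum>j<4. aa E L j / lam^(Suc j)) = k/lam + aa E L 1/lam^2 + aa E L 2/lam^3 + aa E L 3/lam^4"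
    by (simp add: numeral_eq_Suc aa0 lessThan_Suc)
  have ynorm: "\<forall>u\<in>L. \<bar>y u\<bar> \<le> 1 / (\<bar>lam\<bar> - k)" by (rule sol_norm[OF lk sol])
  have ynorm2: "\<forall>u\<in>L. \<bar>y u\<bar> \<le> 2 / \<bar>lam\<bar>"
  proof
    fix u assume "u \<in> L"
    then have "\<bar>y u\<bar> \<le> 1 / (\<bar>lam\<bar> - k)" using ynorm by blast
    also have "\<dots> \<le> 2 / \<bar>lam\<bar>" using lam k1 lk by (simp add: field_simps)
    finally show "\<bar>y u\<bar> \<le> 2 / \<bar>lam\<bar>" .
  qed
  have S4b: "\<bar>S4\<bar> \<le> k * (k^4 * (2 / \<bar>lam\<bar>))"
  proof -
    have "\<bar>S4\<bar> \<le> (\<Sum>u\<in>L. \<bar>(ap E L ^^ 4) y u\<bar>)" unfolding S4_def by (rule sum_abs)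
    also have "\<dots> \<le> (\<Sum>u\<in>L. k^4 * (2 / \<bar>lam\<bar>))"
      using itp_bound[OF finL ynorm2, of _ 4 E] unfolding k_def by (intro sum_mono) auto
    also have "\<dots> = k * (k^4 * (2 / \<bar>lam\<bar>))" unfolding k_def by simp
    finally show ?thesis .
  qed
  define R where "R = S4 / k"
  show ?thesis
  proof (rule exI[of _ R], rule conjI)
    show "\<bar>R\<bar> \<le> 2*k^4/\<bar>lam\<bar>" unfolding R_def using S4b k1 by (simp add: field_simps)
    have g0: "g \<noteq> 0" using g by simp
    have k0: "k \<noteq> 0" using k1 by simp
    have mk: "m = g^2 / k" using g2 k0 by (simp add: field_simps)
    define w where "w = lam / g"
    have w0: "w \<noteq> 0" unfolding w_def using lam0 g0 by simp
    have lw: "lam = g * w" unfolding w_def using g0 by simp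
    have ys: "(\<Sum>u\<in>L. y u) = k/lam + aa E L 1/lam^2 + aa E L 2/lam^3 + aa E L 3/lam^4 + S4/lam^4"
      using ex ex4 by simp
    show "(lam/g)^3 * lam * (lam - m * (\<Sum>u\<in>L. y u)) / g^2
      = Phi (aa E L 1 / k) (aa E L 2 / k) (aa E L 3 / k) (lam/g) (1/g) - R * (1/g)^3"
      unfolding ys R_def mk w_def[symmetric] unfolding lw
      by (rule master_alg[OF g0 k0 w0])
  qed
qed

lemma coarse:
  assumes ev: "is_eigenvalue n (adj E) lam" and lam: "\<bar>lam\<bar> \<ge> 4*k"
    and g: "g > 0" and g2: "g^2 = m * k"
  shows "\<bar>lam\<bar> \<ge> g/2 \<and> \<bar>(lam/g)^2 - 1\<bar> \<le> 4*k/g"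
proof -
  have k1: "k \<ge> 1" by (rule kpos)
  have lk: "\<bar>lam\<bar> > k" using lam k1 by linarith
  obtain y where sol: "\<forall>u\<in>L. lam * y u = 1 + ap E L y u" and lm: "lam = m * (\<Sum>u\<in>L. y u)"
    using eig_to_sol[OF ev lk] by blast
  have ynorm: "\<forall>u\<in>L. \<bar>y u\<bar> \<le> 1 / (\<bar>lam\<bar> - k)" by (rule sol_norm[OF lk sol])
  have ynorm2: "\<forall>u\<in>L. \<bar>y u\<bar> \<le> 2 / \<bar>lam\<bar>"
  proof
    fix u assume "u \<in> L"
    then have "\<bar>y u\<bar> \<le> 1 / (\<bar>lam\<bar> - k)" using ynorm by blast
    also have "\<dots> \<le> 2 / \<bar>lam\<bar>" using lam k1 lk by (simp add: field_simps)
    finally show "\<bar>y u\<bar> \<le> 2 / \<bar>lam\<bar>" .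
  qed
  define th where "th = (\<Sum>u\<in>L. ap E L y u)"
  have thb: "\<bar>th\<bar> \<le> k * (k * (2 / \<bar>lam\<bar>))"
  proof -
    have "\<bar>th\<bar> \<le> (\<Sum>u\<in>L. \<bar>ap E L y u\<bar>)" unfolding th_def by (rule sum_abs)
    also have "\<dots> \<le> (\<Sum>u\<in>L. k * (2 / \<bar>lam\<bar>))"
      using ap_bound[OF finL ynorm2] unfolding k_def by (intro sum_mono) auto
    also have "\<dots> = k * (k * (2 / \<bar>lam\<bar>))" unfolding k_def by simp
    finally show ?thesis .
  qed
  have lamsum: "lam * (\<Sum>u\<in>L. y u) = k + th"
  proof -
    have "lam * (\<Sum>u\<in>L. y u) = (\<Sum>u\<in>L. 1 + ap E L y u)" unfolding sum_distrib_left using sol by simp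
    then show ?thesis unfolding th_def k_def by (simp add: sum.distrib)
  qed
  have l2: "lam^2 = m * (k + th)"
  proof -
    have "lam * lam = lam * (m * (\<Sum>u\<in>L. y u))" by (subst lm[symmetric]) (rule refl)
    also have "\<dots> = m * (lam * (\<Sum>u\<in>L. y u))" by (simp only: mult.left_commute)
    finally show ?thesis unfolding lamsum power2_eq_square .
  qed
  have lpos: "\<bar>lam\<bar> > 0" using lk k1 by linarith
  have th2: "\<bar>th\<bar> \<le> k/2"
  proof -
    have "2 / \<bar>lam\<bar> \<le> 2 / (4*k)" using lam k1 by (intro divide_left_mono) auto
    then have "k * (k * (2 / \<bar>lam\<bar>)) \<le> k * (k * (2 / (4*k)))" using k1 by (intro mult_left_mono) auto
    also have "\<dots> = k/2" using k1 by simp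
    finally show ?thesis using thb by linarith
  qed
  have "k + th \<ge> k/2" using th2 by (simp add: abs_le_iff)
  then have "m * (k + th) \<ge> m * (k/2)" using mpos by (intro mult_left_mono) auto
  moreover have "m * (k/2) = g^2/2" using g2 by simp
  moreover have "g^2/2 \<ge> (g/2)^2" by (simp add: power_divide)
  ultimately have "(g/2)^2 \<le> \<bar>lam\<bar>^2" unfolding l2[symmetric] power2_abs by linarith
  then have lg: "\<bar>lam\<bar> \<ge> g/2" by (rule power2_le_imp_le) simp
  have "\<bar>lam^2 - g^2\<bar> = m * \<bar>th\<bar>" unfolding l2 g2 using mpos by (simp add: algebra_simps abs_mult)
  also have "\<dots> \<le> m * (k * (k * (2 / \<bar>lam\<bar>)))" using thb mpos by (intro mult_left_mono) auto
  also have "\<dots> \<le> m * (k * (k * (2 / (g/2))))"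
  proof -
    have "2 / \<bar>lam\<bar> \<le> 2 / (g/2)" using lg g by (intro divide_left_mono) auto
    then show ?thesis using k1 mpos by (intro mult_left_mono) auto
  qed
  also have "\<dots> = 4 * k * (m * k) / g" by (simp add: field_simps)
  also have "\<dots> = 4 * k * g" unfolding g2[symmetric] using g by (simp add: power2_eq_square)
  finally have h: "\<bar>lam^2 - g^2\<bar> \<le> 4 * k * g" .
  have g2p: "g^2 > 0" using g by simp
  have "\<bar>(lam/g)^2 - 1\<bar> = \<bar>lam^2 - g^2\<bar> / g^2"
  proof -
    have "(lam/g)^2 - 1 = (lam^2 - g^2) / g^2" using g2p by (simp add: power_divide diff_divide_distrib)
    then show ?thesis using g2p by (simp add: abs_divide)
  qed
  also have "\<dots> \<le> 4 * k * g / g^2" using h g2p by (intro divide_right_mono) auto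
  also have "\<dots> = 4*k/g" using g by (simp add: power2_eq_square)
  finally show ?thesis using lg by simp
qed

end


lemma Phi_odd: "Phi b1 b2 b3 (-u) (-z) = - Phi b1 b2 b3 u z"
  unfolding Phi_def by Groebner_Basis.algebra

lemma W_even: "Wf b1 b2 b3 z + Wf b1 b2 b3 (-z) = 2 + 2 * e2f b1 b2 * z^2"
  unfolding Wf_def by (simp add: power2_eq_square power3_eq_cube algebra_simps)

lemma Rbound:
  fixes R lam g k :: real
  assumes R: "\<bar>R\<bar> \<le> 2*k^4/\<bar>lam\<bar>" and lg: "\<bar>lam\<bar> \<ge> g/2" and g: "g > 0"
  shows "\<bar>R * (1/g)^3\<bar> \<le> 4*k^4*(1/g)^4"
proof -
  have lp: "\<bar>lam\<bar> > 0" using lg g by linarith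
  have "2*k^4/\<bar>lam\<bar> \<le> 2*k^4/(g/2)" using lg g by (intro divide_left_mono) auto
  then have R2: "\<bar>R\<bar> \<le> 4*k^4/g" using R by simp
  have "\<bar>R * (1/g)^3\<bar> = \<bar>R\<bar> * (1/g)^3" using g by (simp add: abs_mult)
  also have "\<dots> \<le> (4*k^4/g) * (1/g)^3" using R2 g by (intro mult_right_mono) auto
  also have "\<dots> = 4*k^4*(1/g)^4" by (simp add: power_divide field_simps power_Suc[symmetric] del: power_Suc)
  finally show ?thesis .
qed

context gs
begin

lemma psi_sign:
  assumes lam: "\<bar>lam\<bar> \<ge> 2*k" and g: "g > 0" and g2: "g^2 = m*k" and u: "\<bar>lam\<bar> \<ge> g/2"
  shows "Phi (aa E L 1 / k) (aa E L 2 / k) (aa E L 3 / k) (lam/g) (1/g) > 4*k^4*(1/g)^4 \<Longrightarrow> (lam/g)^3*lam*psi lam > 0"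
    and "Phi (aa E L 1 / k) (aa E L 2 / k) (aa E L 3 / k) (lam/g) (1/g) < -(4*k^4*(1/g)^4) \<Longrightarrow> (lam/g)^3*lam*psi lam < 0"
proof -
  obtain R where R: "\<bar>R\<bar> \<le> 2*k^4/\<bar>lam\<bar>" and eq: "(lam/g)^3 * lam * (lam - m * (\<Sum>u\<in>L. Y lam u)) / g^2
      = Phi (aa E L 1 / k) (aa E L 2 / k) (aa E L 3 / k) (lam/g) (1/g) - R * (1/g)^3"
    using master[OF lam Y_sol[OF lam] g g2] by blast
  have Rb: "\<bar>R * (1/g)^3\<bar> \<le> 4*k^4*(1/g)^4" by (rule Rbound[OF R u g])
  have g2p: "g^2 > 0" using g by simp
  have eq': "(lam/g)^3*lam*psi lam = g^2 * (Phi (aa E L 1 / k) (aa E L 2 / k) (aa E L 3 / k) (lam/g) (1/g) - R * (1/g)^3)"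
    unfolding eq[symmetric] psi_def using g2p by simp
  show "Phi (aa E L 1 / k) (aa E L 2 / k) (aa E L 3 / k) (lam/g) (1/g) > 4*k^4*(1/g)^4 \<Longrightarrow> (lam/g)^3*lam*psi lam > 0"
    unfolding eq' using Rb g2p by (intro mult_pos_pos) (auto simp: abs_le_iff)
  show "Phi (aa E L 1 / k) (aa E L 2 / k) (aa E L 3 / k) (lam/g) (1/g) < -(4*k^4*(1/g)^4) \<Longrightarrow> (lam/g)^3*lam*psi lam < 0"
    unfolding eq' using Rb g2p by (intro mult_pos_neg) (auto simp: abs_le_iff)
qed

lemma eig_Phi:
  assumes ev: "is_eigenvalue n (adj E) lam" and lam: "\<bar>lam\<bar> \<ge> 2*k" and g: "g > 0" and g2: "g^2 = m*k" and u: "\<bar>lam\<bar> \<ge> g/2"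
  shows "\<bar>Phi (aa E L 1 / k) (aa E L 2 / k) (aa E L 3 / k) (lam/g) (1/g)\<bar> \<le> 4*k^4*(1/g)^4"
proof -
  have lk: "\<bar>lam\<bar> > k" using lam kpos by linarith
  obtain y where sol: "\<forall>u\<in>L. lam * y u = 1 + ap E L y u" and lm: "lam = m * (\<Sum>u\<in>L. y u)"
    using eig_to_sol[OF ev lk] by blast
  obtain R where R: "\<bar>R\<bar> \<le> 2*k^4/\<bar>lam\<bar>" and eq: "(lam/g)^3 * lam * (lam - m * (\<Sum>u\<in>L. y u)) / g^2
      = Phi (aa E L 1 / k) (aa E L 2 / k) (aa E L 3 / k) (lam/g) (1/g) - R * (1/g)^3"
    using master[OF lam sol g g2] by blast
  have "Phi (aa E L 1 / k) (aa E L 2 / k) (aa E L 3 / k) (lam/g) (1/g) = R * (1/g)^3"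
    using eq lm by simp
  then show ?thesis using Rbound[OF R u g] by simp
qed

end


theorem lemma4p1:
  fixes r :: nat
  assumes "r \<ge> 3"
  shows "\<exists>C :: real. \<exists>N :: nat. \<forall>n \<ge> N. \<forall>E L.
    simple_graph n E \<and> \<not> has_K_minor n E r \<and>
    (\<forall>E'. simple_graph n E' \<and> \<not> has_K_minor n E' r \<longrightarrow> spread n E' \<le> spread n E) \<and>
    L \<subseteq> {0..<n} \<and> card L = r - 2 \<and>
    (\<forall>u\<in>L. \<forall>v\<in>{0..<n} - L. E u v) \<and>
    (\<forall>u\<in>{0..<n} - L. \<forall>v\<in>{0..<n} - L. \<not> E u v)
    \<longrightarrow> \<bar>spread n E - (2 * gamma_nr n r
           + (1 / (real r - 2)) * (- 3 / (4 * (real r - 2)) * (ell1 E L)\<^sup>2 + ell2 E L)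
             * (1 / gamma_nr n r))\<bar>
        \<le> C / (gamma_nr n r) ^ 3"
proof -
  define kn where "kn = r - 2"
  define K where "K = real kn"
  have K1: "K \<ge> 1" using assms unfolding K_def kn_def by simp
  have rK: "real r - 2 = K" using assms unfolding K_def kn_def by (simp add: of_nat_diff)
  have C1: "4*K^4 \<ge> 0" by simp
  obtain D z0 where Dp: "D \<ge> 0" and z0p: "z0 > 0" and P: "\<forall>b1 b2 b3 z. \<bar>b1\<bar> \<le> K \<longrightarrow> \<bar>b2\<bar> \<le> K^2 \<longrightarrow> \<bar>b3\<bar> \<le> K^3 \<longrightarrow> \<bar>z\<bar> \<le> z0 \<longrightarrow>
    \<bar>Wf b1 b2 b3 z - 1\<bar> + D*z^4 \<le> 1/20 \<and>
    (\<forall>u. \<bar>u-1\<bar> \<le> 1/20 \<longrightarrow> \<bar>Phi b1 b2 b3 u z\<bar> \<le> (4*K^4)*z^4 \<longrightarrow> \<bar>u - Wf b1 b2 b3 z\<bar> \<le> D*z^4) \<and>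
    (z \<noteq> 0 \<longrightarrow> Phi b1 b2 b3 (Wf b1 b2 b3 z + D*z^4) z > (4*K^4)*z^4 \<and> Phi b1 b2 b3 (Wf b1 b2 b3 z - D*z^4) z < - ((4*K^4)*z^4))"
    using window[OF K1 C1] by blast
  define G0 where "G0 = max (1/z0) (80*K)"
  have G0z: "G0 \<ge> 1/z0" and G0K: "G0 \<ge> 80*K" unfolding G0_def by auto
  have G0p: "G0 > 0" using G0K K1 by linarith
  show ?thesis
  proof (rule exI[of _ "2*D"], rule exI[of _ "kn + nat \<lceil>G0^2\<rceil> + 1"], intro allI impI)
    fix n E L
    assume n: "kn + nat \<lceil>G0^2\<rceil> + 1 \<le> n"
    assume H: "simple_graph n E \<and> \<not> has_K_minor n E r \<and>
    (\<forall>E'. simple_graph n E' \<and> \<not> has_K_minor n E' r \<longrightarrow> spread n E' \<le> spread n E) \<and>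
    L \<subseteq> {0..<n} \<and> card L = r - 2 \<and>
    (\<forall>u\<in>L. \<forall>v\<in>{0..<n} - L. E u v) \<and>
    (\<forall>u\<in>{0..<n} - L. \<forall>v\<in>{0..<n} - L. \<not> E u v)"
    then have sg: "simple_graph n E" and Lsub: "L \<subseteq> {0..<n}" and cardL: "card L = kn"
      and full: "\<forall>u\<in>L. \<forall>v\<in>{0..<n} - L. E u v" and indep: "\<forall>u\<in>{0..<n} - L. \<forall>v\<in>{0..<n} - L. \<not> E u v"
      unfolding kn_def by auto
    have finL: "finite L" using Lsub finite_subset by blast
    have kn1: "kn \<ge> 1" using assms unfolding kn_def by simp
    have Lne: "L \<noteq> {}" using cardL kn1 by auto
    have cI: "card ({0..<n} - L) = n - kn" using Lsub finL cardL by (simp add: card_Diff_subset)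
    have Ine: "{0..<n} - L \<noteq> {}"
    proof
      assume "{0..<n} - L = {}"
      then have "card ({0..<n} - L) = 0" by simp
      with cI n show False by simp
    qed
    interpret gs n E L using sg Lsub Lne full indep Ine by unfold_locales
    have kK: "k = K" unfolding k_def K_def using cardL by simp
    have mval: "m = real n - real kn" unfolding m_def I_def cI using n by (simp add: of_nat_diff)
    have m1: "m \<ge> 1" by (rule mpos)
    define g where "g = gamma_nr n r"
    have gdef: "g = sqrt (K * m)" unfolding g_def gamma_nr_def rK mval K_def using assms by (simp add: kn_def of_nat_diff)
    have Km: "K * m \<ge> 0" using K1 m1 by simp
    have g2: "g^2 = m * k" unfolding gdef kK using Km by (simp add: mult.commute)
    have mG: "m \<ge> G0^2"
    proof -
      have "real n \<ge> real kn + real (nat \<lceil>G0^2\<rceil>) + 1" using n by linarith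
      moreover have "real (nat \<lceil>G0^2\<rceil>) \<ge> G0^2" by linarith
      ultimately show ?thesis unfolding mval by linarith
    qed
    have "1 * m \<le> K * m" using K1 m1 by (intro mult_right_mono) auto
    then have "K * m \<ge> G0^2" using mG by linarith
    then have "sqrt (G0^2) \<le> sqrt (K * m)" by (rule real_sqrt_le_mono)
    then have gG: "g \<ge> G0" unfolding gdef using G0p by simp
    have gp: "g > 0" using gG G0p by linarith
    define z where "z = 1/g"
    have zp: "z > 0" unfolding z_def using gp by simp
    have zz0: "z \<le> z0"
    proof -
      have "1/g \<le> 1/G0" using gG G0p by (intro divide_left_mono) auto
      also have "\<dots> \<le> z0" using G0z z0p G0p by (simp add: field_simps)
      finally show ?thesis unfolding z_def .
    qed
    have g80: "g \<ge> 80*K" using gG G0K by linarith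
    define b1 where "b1 = aa E L 1 / k"
    define b2 where "b2 = aa E L 2 / k"
    define b3 where "b3 = aa E L 3 / k"
    have bb: "\<bar>aa E L j / k\<bar> \<le> K^j" for j
    proof -
      have "aa E L j / k \<le> k^(Suc j) / k" using aa_le[OF finL, of E j] kpos unfolding k_def by (intro divide_right_mono) auto
      also have "\<dots> = k^j" using kpos by simp
      finally show ?thesis using aa_ge0[of E L j] kpos kK by simp
    qed
    have hb1: "\<bar>b1\<bar> \<le> K" using bb[of 1] unfolding b1_def by simp
    have hb2: "\<bar>b2\<bar> \<le> K^2" using bb[of 2] unfolding b2_def by simp
    have hb3: "\<bar>b3\<bar> \<le> K^3" using bb[of 3] unfolding b3_def by simp
    have hz: "\<bar>z\<bar> \<le> z0" using zz0 zp by simp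
    have hmz: "\<bar>-z\<bar> \<le> z0" using zz0 zp by simp
    have Pz: "\<bar>Wf b1 b2 b3 z - 1\<bar> + D*z^4 \<le> 1/20 \<and>
    (\<forall>u. \<bar>u-1\<bar> \<le> 1/20 \<longrightarrow> \<bar>Phi b1 b2 b3 u z\<bar> \<le> (4*K^4)*z^4 \<longrightarrow> \<bar>u - Wf b1 b2 b3 z\<bar> \<le> D*z^4) \<and>
    (z \<noteq> 0 \<longrightarrow> Phi b1 b2 b3 (Wf b1 b2 b3 z + D*z^4) z > (4*K^4)*z^4 \<and> Phi b1 b2 b3 (Wf b1 b2 b3 z - D*z^4) z < - ((4*K^4)*z^4))"
      using P[rule_format, OF hb1 hb2 hb3 hz] by blast
    have Pmz: "\<bar>Wf b1 b2 b3 (-z) - 1\<bar> + D*(-z)^4 \<le> 1/20 \<and>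
    (\<forall>u. \<bar>u-1\<bar> \<le> 1/20 \<longrightarrow> \<bar>Phi b1 b2 b3 u (-z)\<bar> \<le> (4*K^4)*(-z)^4 \<longrightarrow> \<bar>u - Wf b1 b2 b3 (-z)\<bar> \<le> D*(-z)^4) \<and>
    (-z \<noteq> 0 \<longrightarrow> Phi b1 b2 b3 (Wf b1 b2 b3 (-z) + D*(-z)^4) (-z) > (4*K^4)*(-z)^4 \<and> Phi b1 b2 b3 (Wf b1 b2 b3 (-z) - D*(-z)^4) (-z) < - ((4*K^4)*(-z)^4))"
      using P[rule_format, OF hb1 hb2 hb3 hmz] by blast
    have gz: "g * z = 1" unfolding z_def using gp by simp
    have g0: "g \<noteq> 0" using gp by simp
    have kpos': "k \<ge> 1" by (rule kpos)
    have z4: "(-z)^4 = z^4" by simp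
    let ?W = "Wf b1 b2 b3 z"
    let ?V = "Wf b1 b2 b3 (-z)"
    have zne: "z \<noteq> 0" "-z \<noteq> 0" using zp by auto
    have win1: "\<bar>?W - 1\<bar> + D*z^4 \<le> 1/20" using Pz by blast
    have win2: "\<bar>?V - 1\<bar> + D*z^4 \<le> 1/20" using Pmz z4 by simp
    have Dz: "D*z^4 \<ge> 0" using Dp by simp
    have W1: "19/20 \<le> ?W - D*z^4" "?W + D*z^4 \<le> 21/20" using win1 Dz abs_ge_self[of "?W - 1"] abs_ge_minus_self[of "?W - 1"] by linarith+
    have V1: "19/20 \<le> ?V - D*z^4" "?V + D*z^4 \<le> 21/20" using win2 Dz abs_ge_self[of "?V - 1"] abs_ge_minus_self[of "?V - 1"] by linarith+
    have Kk4: "4*K^4*z^4 = 4*k^4*(1/g)^4" unfolding kK z_def ..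
    have PhiU1: "Phi b1 b2 b3 (?W - D*z^4) z < - (4*K^4*z^4)" using Pz zne by blast
    have PhiU2: "Phi b1 b2 b3 (?W + D*z^4) z > 4*K^4*z^4" using Pz zne by blast
    have PhiL1: "Phi b1 b2 b3 (?V + D*z^4) (-z) > 4*K^4*z^4" using Pmz zne z4 by auto
    have PhiL2: "Phi b1 b2 b3 (?V - D*z^4) (-z) < - (4*K^4*z^4)" using Pmz zne z4 by auto
    have ivt: "\<exists>x. a \<le> x \<and> x \<le> b \<and> is_eigenvalue n (adj E) x"
      if ab: "a \<le> b" and Sab: "\<forall>x\<in>{a..b}. \<bar>x\<bar> \<ge> 2*k" and pa: "psi a < 0" and pb: "psi b > 0" for a b
    proof -
      have "continuous_on {a..b} psi" by (rule psi_cont[OF Sab])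
      then obtain x where x: "a \<le> x" "x \<le> b" "psi x = 0" using IVT'[of psi a 0 b] pa pb ab by auto
      have xk: "\<bar>x\<bar> \<ge> 2*k" using Sab x by auto
      have "x = m * (\<Sum>u\<in>L. Y x u)" using x(3) unfolding psi_def by simp
      then have "is_eigenvalue n (adj E) x" by (rule sol_to_eig[OF Y_sol[OF xk]])
      then show ?thesis using x by blast
    qed
    have sgn_pos: "psi x < 0" if "(x/g)^3*x*psi x < 0" and "(x/g)^3*x > 0" for x
      using that by (metis mult_pos_pos not_less_iff_gr_or_eq mult_zero_right order_less_asym)
    have sgn_pos2: "psi x > 0" if "(x/g)^3*x*psi x > 0" and "(x/g)^3*x > 0" for x
      using that by (metis mult_pos_neg not_less_iff_gr_or_eq mult_zero_right order_less_asym)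
    define a where "a = g * (?W - D*z^4)"
    define b where "b = g * (?W + D*z^4)"
    have ag: "a/g = ?W - D*z^4" "b/g = ?W + D*z^4" unfolding a_def b_def using g0 by auto
    have a76: "a \<ge> g * (19/20)" unfolding a_def using W1 gp by (intro mult_left_mono) auto
    have a4: "a \<ge> 4*k" using a76 g80 kK kpos' by linarith
    have ab: "a \<le> b" unfolding a_def b_def using gp Dz by (intro mult_left_mono) auto
    have Sab: "\<forall>x\<in>{a..b}. \<bar>x\<bar> \<ge> 2*k" using a4 kpos' by auto
    have ag2: "\<bar>a\<bar> \<ge> g/2" "\<bar>b\<bar> \<ge> g/2" using a76 ab gp by auto
    have pa: "psi a < 0"
    proof (rule sgn_pos)
      show "(a/g)^3*a*psi a < 0"
        by (rule psi_sign(2)[OF _ gp g2 ag2(1)]) (use Sab ab PhiU1 ag Kk4 z_def b1_def b2_def b3_def in auto)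
      show "(a/g)^3*a > 0" using ag W1 a4 kpos' by (intro mult_pos_pos) auto
    qed
    have pb: "psi b > 0"
    proof (rule sgn_pos2)
      show "(b/g)^3*b*psi b > 0"
        by (rule psi_sign(1)[OF _ gp g2 ag2(2)]) (use Sab ab PhiU2 ag Kk4 z_def b1_def b2_def b3_def in auto)
      show "(b/g)^3*b > 0" using ag W1 a4 ab kpos' Dz by (intro mult_pos_pos) auto
    qed
    obtain x0 where x0: "a \<le> x0" "is_eigenvalue n (adj E) x0" using ivt[OF ab Sab pa pb] by blast
    define a' where "a' = - (g * (?V + D*z^4))"
    define b' where "b' = - (g * (?V - D*z^4))"
    have ag': "a'/g = - (?V + D*z^4)" "b'/g = - (?V - D*z^4)" unfolding a'_def b'_def using g0 by auto
    have b76: "b' \<le> - (g * (19/20))" unfolding b'_def using V1 gp by (simp add: mult_left_mono)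
    have b4: "b' \<le> - (4*k)" using b76 g80 kK kpos' by linarith
    have ab': "a' \<le> b'" unfolding a'_def b'_def using gp Dz by (simp add: mult_left_mono)
    have Sab': "\<forall>x\<in>{a'..b'}. \<bar>x\<bar> \<ge> 2*k" using b4 kpos' by auto
    have ag2': "\<bar>a'\<bar> \<ge> g/2" "\<bar>b'\<bar> \<ge> g/2" using b76 ab' gp by auto
    have PhiA: "Phi b1 b2 b3 (a'/g) (1/g) < - (4*K^4*z^4)"
      unfolding ag' z_def[symmetric] using Phi_odd[of b1 b2 b3 "?V + D*z^4" "-z"] PhiL1 by simp
    have PhiB: "Phi b1 b2 b3 (b'/g) (1/g) > 4*K^4*z^4"
      unfolding ag' z_def[symmetric] using Phi_odd[of b1 b2 b3 "?V - D*z^4" "-z"] PhiL2 by simp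
    have pa': "psi a' < 0"
    proof (rule sgn_pos)
      show "(a'/g)^3*a'*psi a' < 0"
        by (rule psi_sign(2)[OF _ gp g2 ag2'(1)]) (use Sab' ab' PhiA Kk4 b1_def b2_def b3_def in auto)
      have "(a'/g)^3 < 0" using ag' V1 Dz by simp
      moreover have "a' < 0" using ab' b4 kpos' by linarith
      ultimately show "(a'/g)^3*a' > 0" by (simp add: mult_neg_neg)
    qed
    have pb': "psi b' > 0"
    proof (rule sgn_pos2)
      show "(b'/g)^3*b'*psi b' > 0"
        by (rule psi_sign(1)[OF _ gp g2 ag2'(2)]) (use Sab' ab' PhiB Kk4 b1_def b2_def b3_def in auto)
      have "(b'/g)^3 < 0" using ag' V1 Dz by simp
      moreover have "b' < 0" using b4 kpos' by linarith
      ultimately show "(b'/g)^3*b' > 0" by (simp add: mult_neg_neg)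
    qed
    obtain x1 where x1: "x1 \<le> b'" "is_eigenvalue n (adj E) x1" using ivt[OF ab' Sab' pa' pb'] by blast
    define S where "S = {x. is_eigenvalue n (adj E) x}"
    have finS: "finite S" unfolding S_def by (rule eig_finite)
    have x0S: "x0 \<in> S" and x1S: "x1 \<in> S" unfolding S_def using x0 x1 by auto
    have SMax: "Max S \<in> S" "x0 \<le> Max S" using finS x0S by (auto intro: Max_in Max_ge)
    have SMin: "Min S \<in> S" "Min S \<le> x1" using finS x1S by (auto intro: Min_in Min_le)
    have sp: "spread n E = Max S - Min S" unfolding spread_def S_def ..
    have k80: "4*k/g \<le> 1/20"
    proof -
      have "4*k/g \<le> 4*k/(80*k)" using g80 kK kpos' by (intro divide_left_mono) auto
      then show ?thesis using kpos' by simp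
    qed
    have hi: "\<bar>Max S - g * ?W\<bar> \<le> g * (D*z^4)"
    proof -
      let ?l = "Max S"
      have ev: "is_eigenvalue n (adj E) ?l" using SMax unfolding S_def by simp
      have l4: "?l \<ge> 4*k" using SMax x0 a4 by linarith
      have co: "\<bar>?l\<bar> \<ge> g/2 \<and> \<bar>(?l/g)^2 - 1\<bar> \<le> 4*k/g" using coarse[OF ev _ gp g2] l4 by simp
      have wpos: "?l/g > 0" using l4 kpos' gp by simp
      have "\<bar>?l/g - 1\<bar> \<le> \<bar>(?l/g)^2 - 1\<bar>"
      proof -
        have "(?l/g)^2 - 1 = (?l/g - 1) * (?l/g + 1)" by (simp add: power2_eq_square algebra_simps)
        then have "\<bar>(?l/g)^2 - 1\<bar> = \<bar>?l/g - 1\<bar> * (?l/g + 1)" using wpos by (simp add: abs_mult)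
        moreover have "\<bar>?l/g - 1\<bar> * 1 \<le> \<bar>?l/g - 1\<bar> * (?l/g + 1)" using wpos by (intro mult_left_mono) auto
        ultimately show ?thesis by simp
      qed
      then have w1: "\<bar>?l/g - 1\<bar> \<le> 1/20" using co k80 by linarith
      have ph: "\<bar>Phi b1 b2 b3 (?l/g) z\<bar> \<le> 4*K^4*z^4"
        using eig_Phi[OF ev _ gp g2] l4 kpos' co kK unfolding b1_def b2_def b3_def z_def by simp
      have "\<bar>?l/g - ?W\<bar> \<le> D*z^4" using Pz w1 ph by blast
      then have "g * \<bar>?l/g - ?W\<bar> \<le> g * (D*z^4)" using gp by (intro mult_left_mono) auto
      moreover have "g * \<bar>?l/g - ?W\<bar> = \<bar>?l - g * ?W\<bar>"
      proof -
        have "g * \<bar>?l/g - ?W\<bar> = \<bar>g * (?l/g - ?W)\<bar>" using gp by (simp add: abs_mult)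
        also have "g * (?l/g - ?W) = ?l - g * ?W" using g0 by (simp add: right_diff_distrib)
        finally show ?thesis .
      qed
      ultimately show ?thesis by simp
    qed
    have lo: "\<bar>Min S + g * ?V\<bar> \<le> g * (D*z^4)"
    proof -
      let ?l = "Min S"
      have ev: "is_eigenvalue n (adj E) ?l" using SMin unfolding S_def by simp
      have l4: "?l \<le> - (4*k)" using SMin x1 b4 by linarith
      have co: "\<bar>?l\<bar> \<ge> g/2 \<and> \<bar>(?l/g)^2 - 1\<bar> \<le> 4*k/g" using coarse[OF ev _ gp g2] l4 by simp
      have wpos: "-(?l/g) > 0" using l4 kpos' gp by (simp add: divide_neg_pos)
      have "\<bar>-(?l/g) - 1\<bar> \<le> \<bar>(?l/g)^2 - 1\<bar>"
      proof -
        have "(?l/g)^2 - 1 = (-(?l/g) - 1) * (-(?l/g) + 1)" by (simp add: power2_eq_square algebra_simps)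
        then have "\<bar>(?l/g)^2 - 1\<bar> = \<bar>-(?l/g) - 1\<bar> * (-(?l/g) + 1)" using wpos by (simp add: abs_mult)
        moreover have "\<bar>-(?l/g) - 1\<bar> * 1 \<le> \<bar>-(?l/g) - 1\<bar> * (-(?l/g) + 1)" using wpos by (intro mult_left_mono) auto
        ultimately show ?thesis by simp
      qed
      then have w1: "\<bar>-(?l/g) - 1\<bar> \<le> 1/20" using co k80 by linarith
      have ph: "\<bar>Phi b1 b2 b3 (?l/g) z\<bar> \<le> 4*K^4*z^4"
        using eig_Phi[OF ev _ gp g2] l4 kpos' co kK unfolding b1_def b2_def b3_def z_def by simp
      have ph2: "\<bar>Phi b1 b2 b3 (-(?l/g)) (-z)\<bar> \<le> 4*K^4*(-z)^4" using ph Phi_odd[of b1 b2 b3 "?l/g" z] z4 by simp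
      have "\<bar>-(?l/g) - ?V\<bar> \<le> D*(-z)^4" using Pmz w1 ph2 by blast
      then have "g * \<bar>-(?l/g) - ?V\<bar> \<le> g * (D*z^4)" using gp z4 by (intro mult_left_mono) auto
      moreover have "g * \<bar>-(?l/g) - ?V\<bar> = \<bar>?l + g * ?V\<bar>"
      proof -
        have "g * \<bar>-(?l/g) - ?V\<bar> = \<bar>g * (-(?l/g) - ?V)\<bar>" using gp by (simp add: abs_mult)
        also have "g * (-(?l/g) - ?V) = - (?l + g * ?V)" using g0 by (simp add: right_diff_distrib)
        finally show ?thesis by simp
      qed
      ultimately show ?thesis by simp
    qed
    have e2: "2 * e2f b1 b2 = (1 / K) * (- 3 / (4 * K) * (ell1 E L)\<^sup>2 + ell2 E L)"
      unfolding e2f_def b1_def b2_def aa1 aa2 kK using K1 by (simp add: field_simps power2_eq_square)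
    have targ: "2 * g + (1 / K) * (- 3 / (4 * K) * (ell1 E L)\<^sup>2 + ell2 E L) * (1 / g) = g * ?W + g * ?V"
    proof -
      have "g * ?W + g * ?V = g * (2 + 2 * e2f b1 b2 * z^2)" using W_even[of b1 b2 b3 z] by (simp add: distrib_left[symmetric])
      also have "\<dots> = 2 * g + 2 * e2f b1 b2 * (1/g)" unfolding z_def using g0 by (simp add: field_simps power2_eq_square)
      finally show ?thesis unfolding e2 by simp
    qed
    have g4: "g^4 = g * g^3" by (simp add: power4_eq_xxxx power3_eq_cube)
    have gD: "g * (D*z^4) = D / g^3"
    proof -
      have "g * (D*z^4) = D * (g * (1/g)^4)" unfolding z_def by (simp only: mult.left_commute)
      also have "g * (1/g)^4 = 1 / g^3" unfolding power_one_over g4 using g0 by simp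
      finally show ?thesis by simp
    qed
    have eqn: "spread n E - (2 * g + (1 / K) * (- 3 / (4 * K) * (ell1 E L)\<^sup>2 + ell2 E L) * (1 / g))
        = (Max S - g * ?W) - (Min S + g * ?V)" using sp targ by linarith
    have D2: "2 * D / g^3 = 2 * (D / g^3)" by simp
    have fin: "\<bar>spread n E - (2 * g + (1 / K) * (- 3 / (4 * K) * (ell1 E L)\<^sup>2 + ell2 E L) * (1 / g))\<bar>
        \<le> 2 * D / g^3" unfolding eqn using hi lo gD D2 by linarith
    have gg: "gamma_nr n r = g" unfolding g_def ..
    show "\<bar>spread n E - (2 * gamma_nr n r
           + (1 / (real r - 2)) * (- 3 / (4 * (real r - 2)) * (ell1 E L)\<^sup>2 + ell2 E L)
             * (1 / gamma_nr n r))\<bar>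
        \<le> 2 * D / (gamma_nr n r) ^ 3" unfolding rK gg by (rule fin)
  qed
qed

end
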